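(* Setting: $\Phi(w)=f(w)+g(w)+h(w)$ on $\mathbb{R}^d$ with $f=\frac1n\sum_{j=1}^n f_j$, each $f_j$ $L$-smooth; $g:\mathbb{R}^d\to\mathbb{R}$ such that for every $\lambda>0$ and $w$ the minimum of $x\mapsto\frac{1}{2\lambda}\|w-x\|_2^2+g(x)$ is attained at a chosen point $\zeta^\lambda(w)$; $h$ proper, closed, convex. Let $e_\lambda g(w)=\frac{1}{2\lambda}\|w-\zeta^\lambda(w)\|_2^2+g(\zeta^\lambda(w))$, $\tilde\Phi_\lambda=f+e_\lambda g+h$, and assume $\tilde\Phi_\lambda$ has a global minimizer $w^*_\lambda$. Algorithm VRSPA with positive integers $S$ (number of epochs), $m$ (epoch length), batch size $b=m^2$, $\theta\in\mathbb{R}$, $\lambda=(Sm)^{-\theta}$, $L_\lambda=L+(Sm)^\theta$, $\gamma=\frac{1}{6L_\lambda}$, initial point $\tilde w^1$: for $k=1,\dots,S$: set $w^k_1=\tilde w^k$, $G^k=\nabla f(\tilde w^k)$; for $t=1,\dots,m$: draw a multiset $I$ of $b$ indices i.i.d. uniformly from $\{1,\dots,n\}$ (independent of the past), set $V^k_t=\frac1b\sum_{j\in I}\left(\nabla f_j(w^k_t)-\nabla f_j(\tilde w^k)\right)+G^k+\frac1\lambda\left(w^k_t-\zeta^\lambda(w^k_t)\right)$ and $w^k_{t+1}=\operatorname{prox}_{\gamma h}(w^k_t-\gamma V^k_t)$; then set $\tilde w^{k+1}=w^k_{m+1}$. Finally draw $(R,T)$ uniformly from $\{1,\dots,S\}\times\{1,\dots,m\}$.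 Claim: with $\mathcal{G}^{R,T}_{\gamma,E}(w^R_T):=\frac1\gamma\left(w^R_T-\operatorname{prox}_{\gamma h}\left(w^R_T-\gamma\left(\nabla f(w^R_T)+\frac1\lambda(w^R_T-\zeta^\lambda(w^R_T))\right)\right)\right)$, $$\mathbb{E}\|\mathcal{G}^{R,T}_{\gamma,E}(w^R_T)\|_2^2\le\tilde{\mathcal{D}}\,\frac{L+(Sm)^\theta}{Sm},$$ where $\tilde{\mathcal{D}}=36\left(\tilde\Phi_\lambda(\tilde w^1)-\tilde\Phi_\lambda(w^*_\lambda)\right)$.
   Context: $\operatorname{prox}_{\gamma h}(v)=\arg\min_x\left(\frac{1}{2\gamma}\|v-x\|_2^2+h(x)\right)$. A function is $L$-smooth if it is differentiable with $L$-Lipschitz gradient. *)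

theory Defs
  imports "HOL-Analysis.Analysis" "HOL-Probability.Probability"
begin

definition proper_fun :: "('a \<Rightarrow> ereal) \<Rightarrow> bool" where
  "proper_fun h \<longleftrightarrow> (\<forall>x. h x > -\<infinity>) \<and> (\<exists>x. h x < \<infinity>)"

definition closed_fun :: "('a::topological_space \<Rightarrow> ereal) \<Rightarrow> bool" where
  "closed_fun h \<longleftrightarrow> closed {(x, r::real). h x \<le> ereal r}"

definition convex_fun :: "('a::real_vector \<Rightarrow> ereal) \<Rightarrow> bool" where
  "convex_fun h \<longleftrightarrow> (\<forall>x y. \<forall>t::real. 0 \<le> t \<and> t \<le> 1 \<longrightarrow>
      h ((1 - t) *\<^sub>R x + t *\<^sub>R y) \<le> ereal (1 - t) * h x + ereal t * h y)"

definition prox :: "real \<Rightarrow> ('a::real_normed_vector \<Rightarrow> ereal) \<Rightarrow> 'a \<Rightarrow> 'a" where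
  "prox \<gamma> h v = (THE x. \<forall>y. ereal (1 / (2 * \<gamma>) * (norm (v - x))\<^sup>2) + h x
                             \<le> ereal (1 / (2 * \<gamma>) * (norm (v - y))\<^sup>2) + h y)"

definition full_grad :: "nat \<Rightarrow> (nat \<Rightarrow> 'a \<Rightarrow> 'a::real_vector) \<Rightarrow> 'a \<Rightarrow> 'a" where
  "full_grad n df x = (1 / real n) *\<^sub>R (\<Sum>j=1..n. df j x)"

text \<open>Inner loop of VRSPA in epoch k starting from the snapshot wt (= tilde w^k).
  \<open>vrspa_inner \<dots> wt k t\<close> is w^k_{t+1}.  The sample \<open>\<omega> (k, t, i)\<close>, i = 1..b, is the
  i-th index of the multiset I drawn at inner step t of epoch k.\<close>
fun vrspa_inner :: "nat \<Rightarrow> nat \<Rightarrow> (nat \<Rightarrow> 'a \<Rightarrow> 'a::real_normed_vector) \<Rightarrow> (real \<Rightarrow> 'a \<Rightarrow> 'a)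
    \<Rightarrow> ('a \<Rightarrow> ereal) \<Rightarrow> real \<Rightarrow> real \<Rightarrow> (nat \<times> nat \<times> nat \<Rightarrow> nat) \<Rightarrow> 'a \<Rightarrow> nat \<Rightarrow> nat \<Rightarrow> 'a" where
  "vrspa_inner n b df \<zeta> h lam \<gamma> \<omega> wt k 0 = wt"
| "vrspa_inner n b df \<zeta> h lam \<gamma> \<omega> wt k (Suc t) =
     (let w = vrspa_inner n b df \<zeta> h lam \<gamma> \<omega> wt k t;
          V = (1 / real b) *\<^sub>R (\<Sum>i=1..b. df (\<omega> (k, Suc t, i)) w - df (\<omega> (k, Suc t, i)) wt)
              + full_grad n df wt + (1 / lam) *\<^sub>R (w - \<zeta> lam w)
      in prox \<gamma> h (w - \<gamma> *\<^sub>R V))"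

text \<open>Snapshots: \<open>vrspa_snap \<dots> w1 k\<close> = tilde w^k for k \<ge> 1.\<close>
fun vrspa_snap :: "nat \<Rightarrow> nat \<Rightarrow> nat \<Rightarrow> (nat \<Rightarrow> 'a \<Rightarrow> 'a::real_normed_vector) \<Rightarrow> (real \<Rightarrow> 'a \<Rightarrow> 'a)
    \<Rightarrow> ('a \<Rightarrow> ereal) \<Rightarrow> real \<Rightarrow> real \<Rightarrow> (nat \<times> nat \<times> nat \<Rightarrow> nat) \<Rightarrow> 'a \<Rightarrow> nat \<Rightarrow> 'a" where
  "vrspa_snap n m b df \<zeta> h lam \<gamma> \<omega> w1 0 = w1"
| "vrspa_snap n m b df \<zeta> h lam \<gamma> \<omega> w1 (Suc 0) = w1"
| "vrspa_snap n m b df \<zeta> h lam \<gamma> \<omega> w1 (Suc (Suc k)) =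
     vrspa_inner n b df \<zeta> h lam \<gamma> \<omega> (vrspa_snap n m b df \<zeta> h lam \<gamma> \<omega> w1 (Suc k)) (Suc k) m"

text \<open>Iterate w^k_t (k \<ge> 1, 1 \<le> t \<le> m+1).\<close>
definition vrspa_iter :: "nat \<Rightarrow> nat \<Rightarrow> nat \<Rightarrow> (nat \<Rightarrow> 'a \<Rightarrow> 'a::real_normed_vector) \<Rightarrow> (real \<Rightarrow> 'a \<Rightarrow> 'a)
    \<Rightarrow> ('a \<Rightarrow> ereal) \<Rightarrow> real \<Rightarrow> real \<Rightarrow> (nat \<times> nat \<times> nat \<Rightarrow> nat) \<Rightarrow> 'a \<Rightarrow> nat \<Rightarrow> nat \<Rightarrow> 'a" where
  "vrspa_iter n m b df \<zeta> h lam \<gamma> \<omega> w1 k t =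
     vrspa_inner n b df \<zeta> h lam \<gamma> \<omega> (vrspa_snap n m b df \<zeta> h lam \<gamma> \<omega> w1 k) k (t - 1)"

definition sample_pmf :: "nat \<Rightarrow> nat \<Rightarrow> nat \<Rightarrow> nat \<Rightarrow> (nat \<times> nat \<times> nat \<Rightarrow> nat) pmf" where
  "sample_pmf n S m b = Pi_pmf ({1..S} \<times> {1..m} \<times> {1..b}) 0 (\<lambda>_. pmf_of_set {1..n})"

definition env :: "real \<Rightarrow> ('a::real_normed_vector \<Rightarrow> real) \<Rightarrow> (real \<Rightarrow> 'a \<Rightarrow> 'a) \<Rightarrow> 'a \<Rightarrow> real" where
  "env lam g \<zeta> w = 1 / (2 * lam) * (norm (w - \<zeta> lam w))\<^sup>2 + g (\<zeta> lam w)"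

end

theory Submission
  imports Defs
begin

definition qf :: "real \<Rightarrow> ('a::real_normed_vector \<Rightarrow> ereal) \<Rightarrow> 'a \<Rightarrow> 'a \<Rightarrow> ereal" where
  "qf \<gamma> h v x = ereal (1 / (2 * \<gamma>) * (norm (v - x))\<^sup>2) + h x"

lemma closed_sublevel:
  fixes h :: "'a::euclidean_space \<Rightarrow> ereal"
  assumes "closed_fun h"
  shows "closed {x. h x \<le> ereal c}"
proof -
  have "{x. h x \<le> ereal c} = (\<lambda>x. (x, c)) -` {(x, r::real). h x \<le> ereal r}" by auto
  moreover have "closed ((\<lambda>x. (x, c)) -` {(x, r::real). h x \<le> ereal r})"
    using assms unfolding closed_fun_def
    by (intro continuous_closed_vimage) (auto intro!: continuous_intros)
  ultimately show ?thesis by simp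
qed

lemma h_minorant:
  fixes h :: "'a::euclidean_space \<Rightarrow> ereal"
  assumes hp: "proper_fun h" and hc: "closed_fun h" and hv: "convex_fun h" and h0: "h x0 = ereal c0"
  shows "\<exists>\<delta>>0. \<forall>x. ereal (c0 - 1 - norm (x - x0) / \<delta>) \<le> h x"
proof -
  let ?C = "{x. h x \<le> ereal (c0 - 1)}"
  have "open (- ?C)" using closed_sublevel[OF hc] by (simp add: open_Compl)
  moreover have "x0 \<in> - ?C" using h0 by simp
  ultimately obtain \<delta> where dpos: "\<delta> > 0" and db: "ball x0 \<delta> \<subseteq> - ?C"
    using open_contains_ball by blast
  have near: "ereal (c0 - 1) < h y" if "norm (y - x0) < \<delta>" for y
  proof -
    have "y \<in> ball x0 \<delta>" using that by (simp add: dist_norm norm_minus_commute)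
    then show ?thesis using db by auto
  qed
  have "ereal (c0 - 1 - norm (x - x0) / (\<delta>/2)) \<le> h x" for x
  proof (cases "h x = \<infinity>")
    case True then show ?thesis by simp
  next
    case False
    have "h x > -\<infinity>" using hp unfolding proper_fun_def by auto
    with False obtain hx where hx: "h x = ereal hx" by (cases "h x") auto
    show ?thesis
    proof (cases "norm (x - x0) < \<delta>")
      case True
      have "ereal (c0 - 1 - norm (x - x0) / (\<delta>/2)) \<le> ereal (c0 - 1)"
        using dpos by simp
      also have "\<dots> \<le> h x" using near[OF True] by simp
      finally show ?thesis .
    next
      case False
      define d where "d = norm (x - x0)"
      have dd: "d \<ge> \<delta>" using False d_def by simp
      define t where "t = \<delta> / (2 * d)"
      have tpos: "t > 0" and tle: "t \<le> 1" using dd dpos by (auto simp: t_def field_simps)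
      define y where "y = (1 - t) *\<^sub>R x0 + t *\<^sub>R x"
      have "y - x0 = t *\<^sub>R (x - x0)" by (simp add: y_def algebra_simps)
      hence "norm (y - x0) = t * d" using tpos by (simp add: d_def)
      also have "\<dots> = \<delta> / 2" using dd dpos by (simp add: t_def)
      finally have "norm (y - x0) < \<delta>" using dpos by simp
      hence "ereal (c0 - 1) < h y" by (rule near)
      also have "h y \<le> ereal (1 - t) * h x0 + ereal t * h x"
        using hv tpos tle unfolding convex_fun_def y_def by auto
      also have "\<dots> = ereal ((1 - t) * c0 + t * hx)" using h0 hx by simp
      finally have "c0 - 1 < (1 - t) * c0 + t * hx" by simp
      hence "c0 - 1 / t < hx" using tpos by (simp add: field_simps)
      moreover have "1 / t = d / (\<delta>/2)" using dpos dd by (simp add: t_def field_simps)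
      ultimately show ?thesis using hx d_def dpos by simp
    qed
  qed
  then show ?thesis using dpos by (intro exI[of _ "\<delta>/2"]) auto
qed


lemma quad_bound:
  fixes s a B C :: real
  assumes "s \<ge> 0" "a \<ge> 0" "B \<ge> 0" "C \<ge> 0" "s > a \<Longrightarrow> (s - a)\<^sup>2 \<le> C + B * s - 2 * a * s + 2 * a * s"
  shows "s \<le> a + 1 + (2 * a + B) + C"
proof (cases "s \<le> a + 1")
  case True then show ?thesis using assms by simp
next
  case False
  hence s1: "s \<ge> 1" "s > a" using assms by auto
  have "(s - a)\<^sup>2 \<le> C + B * s" using assms(5)[OF s1(2)] by simp
  hence "s\<^sup>2 - 2 * a * s + a\<^sup>2 \<le> C + B * s" by (simp add: power2_diff mult.commute mult.left_commute)
  moreover have "s\<^sup>2 - 2 * a * s + a\<^sup>2 = s * s - 2 * a * s + a * a" by (simp add: power2_eq_square)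
  ultimately have "s * s \<le> (2 * a + B) * s + C - a * a" by (simp add: algebra_simps)
  hence "s * s \<le> (2 * a + B) * s + C" by (smt (verit) mult_nonneg_nonneg assms(2))
  also have "\<dots> \<le> (2 * a + B) * s + C * s" using mult_left_mono[of 1 s C] s1 assms by simp
  finally have "s * s \<le> (2 * a + B + C) * s" by (simp add: algebra_simps)
  hence "s \<le> 2 * a + B + C" using s1 by (simp add: mult_le_cancel_right)
  then show ?thesis using assms by simp
qed

lemma prox_exists:
  fixes h :: "'a::euclidean_space \<Rightarrow> ereal"
  assumes hp: "proper_fun h" and hc: "closed_fun h" and hv: "convex_fun h" and gpos: "\<gamma> > 0"
  shows "\<exists>p. \<forall>y. qf \<gamma> h v p \<le> qf \<gamma> h v y"
proof -
  obtain x0 where "h x0 < \<infinity>" using hp unfolding proper_fun_def by auto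
  moreover have "h x0 > -\<infinity>" using hp unfolding proper_fun_def by auto
  ultimately obtain c0 where h0: "h x0 = ereal c0" by (cases "h x0") auto
  obtain \<delta> where dpos: "\<delta> > 0" and minor: "\<And>x. ereal (c0 - 1 - norm (x - x0) / \<delta>) \<le> h x"
    using h_minorant[OF hp hc hv h0] by blast
  define a where "a = norm (v - x0)"
  define Q0 where "Q0 = 1 / (2 * \<gamma>) * a\<^sup>2 + c0"
  define B where "B = 2 * \<gamma> / \<delta>"
  define C where "C = a\<^sup>2 + 2 * \<gamma>"
  define R where "R = a + 1 + (2 * a + B) + C"
  define lo where "lo = c0 - 1 - R / \<delta>"
  have q0: "qf \<gamma> h v x0 = ereal Q0" by (simp add: qf_def Q0_def a_def h0)
  have bnd: "norm (y - x0) \<le> R \<and> h y = ereal (real_of_ereal (h y)) \<and> lo \<le> real_of_ereal (h y)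
             \<and> real_of_ereal (h y) \<le> Q0"
    if qy: "qf \<gamma> h v y \<le> ereal Q0" for y
  proof -
    define s where "s = norm (y - x0)"
    have "h y \<noteq> \<infinity>" using qy by (auto simp: qf_def)
    moreover have "h y \<noteq> -\<infinity>" using hp unfolding proper_fun_def by auto
    ultimately obtain hy where hy: "h y = ereal hy" by (cases "h y") auto
    have q: "1 / (2 * \<gamma>) * (norm (v - y))\<^sup>2 + hy \<le> Q0" using qy hy by (simp add: qf_def)
    have mh: "c0 - 1 - s / \<delta> \<le> hy" using minor[of y] hy s_def by simp
    have "(norm (v - y))\<^sup>2 \<le> 2 * \<gamma> * (Q0 - hy)" using q gpos by (simp add: field_simps)
    also have "\<dots> \<le> 2 * \<gamma> * (Q0 - c0 + 1 + s / \<delta>)" using mh gpos by (intro mult_left_mono) auto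
    also have "\<dots> = C + B * s" using gpos dpos by (simp add: Q0_def C_def B_def field_simps)
    finally have vy: "(norm (v - y))\<^sup>2 \<le> C + B * s" .
    have "(s - a)\<^sup>2 \<le> C + B * s - 2 * a * s + 2 * a * s" if "s > a"
    proof -
      have "s \<le> norm (y - v) + a" unfolding s_def a_def using norm_triangle_ineq[of "y - v" "v - x0"] by simp
      hence "s - a \<le> norm (v - y)" by (simp add: norm_minus_commute)
      hence "(s - a)\<^sup>2 \<le> (norm (v - y))\<^sup>2" using that by (intro power_mono) auto
      then show ?thesis using vy by simp
    qed
    hence sR: "s \<le> R" unfolding R_def
      by (intro quad_bound) (auto simp: s_def a_def B_def C_def dpos gpos less_imp_le)
    have "s / \<delta> \<le> R / \<delta>" using sR dpos by (simp add: divide_right_mono)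
    hence "lo \<le> hy" using mh unfolding lo_def by linarith
    moreover have "0 \<le> 1 / (2 * \<gamma>) * (norm (v - y))\<^sup>2" using gpos by simp
    hence "hy \<le> Q0" using q by linarith
    ultimately show ?thesis using sR hy s_def by simp
  qed
  define K where "K = {(x, r::real). h x \<le> ereal r} \<inter> (cball x0 R \<times> {lo..Q0})"
  have cK: "compact K" unfolding K_def using hc unfolding closed_fun_def
    by (intro closed_Int_compact compact_Times compact_cball compact_Icc) auto
  have x0K: "(x0, c0) \<in> K"
    using bnd[of x0] q0 h0 by (auto simp: K_def)
  have cont: "continuous_on K (\<lambda>(x, r). 1 / (2 * \<gamma>) * (norm (v - x))\<^sup>2 + r)"
    using gpos by (auto intro!: continuous_intros simp: case_prod_beta)
  obtain z where zK: "z \<in> K" and zmin: "\<And>y. y \<in> K \<Longrightarrow>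
       (\<lambda>(x, r). 1 / (2 * \<gamma>) * (norm (v - x))\<^sup>2 + r) z \<le> (\<lambda>(x, r). 1 / (2 * \<gamma>) * (norm (v - x))\<^sup>2 + r) y"
    using continuous_attains_inf[OF cK _ cont] x0K by blast
  obtain p rp where z: "z = (p, rp)" by (cases z)
  have hprp: "h p \<le> ereal rp" using zK z by (auto simp: K_def)
  have qp: "qf \<gamma> h v p \<le> ereal (1 / (2 * \<gamma>) * (norm (v - p))\<^sup>2 + rp)"
  proof -
    have "ereal (1 / (2 * \<gamma>) * (norm (v - p))\<^sup>2) + h p \<le> ereal (1 / (2 * \<gamma>) * (norm (v - p))\<^sup>2) + ereal rp"
      using hprp by (intro add_mono) auto
    then show ?thesis by (simp add: qf_def)
  qed
  have "(x0, c0) \<in> K" using bnd[of x0] q0 h0 by (auto simp: K_def)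
  from zmin[OF this] have pQ: "1 / (2 * \<gamma>) * (norm (v - p))\<^sup>2 + rp \<le> Q0"
    using z by (simp add: Q0_def a_def)
  have "qf \<gamma> h v p \<le> qf \<gamma> h v y" for y
  proof (cases "qf \<gamma> h v y \<le> ereal Q0")
    case True
    from bnd[OF True] have "(y, real_of_ereal (h y)) \<in> K" by (auto simp: K_def dist_norm norm_minus_commute)
    from zmin[OF this] z have "1 / (2 * \<gamma>) * (norm (v - p))\<^sup>2 + rp
        \<le> 1 / (2 * \<gamma>) * (norm (v - y))\<^sup>2 + real_of_ereal (h y)" by simp
    moreover obtain hy where hy: "h y = ereal hy" using bnd[OF True] by blast
    ultimately have "ereal (1 / (2 * \<gamma>) * (norm (v - p))\<^sup>2 + rp) \<le> qf \<gamma> h v y"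
      unfolding qf_def by simp
    then show ?thesis using qp by simp
  next
    case False
    hence "ereal Q0 < qf \<gamma> h v y" by simp
    moreover have "ereal (1 / (2 * \<gamma>) * (norm (v - p))\<^sup>2 + rp) \<le> ereal Q0" using pQ by simp
    ultimately show ?thesis using qp by (meson order.trans less_imp_le)
  qed
  then show ?thesis by blast
qed


lemma norm_diff_sq: "(norm (x - y))\<^sup>2 = (norm x)\<^sup>2 - 2 * inner x y + (norm (y::'a::real_inner))\<^sup>2"
  by (simp add: power2_norm_eq_inner inner_diff_left inner_diff_right inner_commute)

lemma norm_add_sq: "(norm (x + y))\<^sup>2 = (norm x)\<^sup>2 + 2 * inner x y + (norm (y::'a::real_inner))\<^sup>2"
  by (simp add: power2_norm_eq_inner inner_add_left inner_add_right inner_commute)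

lemma small_t_ineq:
  fixes A B c :: real
  assumes "\<And>t. 0 < t \<Longrightarrow> t \<le> 1 \<Longrightarrow> A \<le> B + t * c" "c \<ge> 0"
  shows "A \<le> B"
proof (rule ccontr)
  assume "\<not> A \<le> B"
  hence g: "A - B > 0" by simp
  define t where "t = min 1 ((A - B) / (2 * (c + 1)))"
  have tp: "t > 0" "t \<le> 1" using g assms(2) by (auto simp: t_def)
  have "t * c \<le> (A - B) / (2 * (c + 1)) * c" using assms(2) by (intro mult_right_mono) (auto simp: t_def)
  also have "\<dots> = (A - B) * (c / (2 * (c + 1)))" by simp
  also have "\<dots> < (A - B) * 1"
  proof (rule mult_strict_left_mono)
    show "c / (2 * (c + 1)) < 1" using assms(2) by (simp add: field_simps)
  qed (use g in auto)
  finally show False using assms(1)[OF tp] by simp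
qed

lemma prox_var_ineq:
  fixes h :: "'a::euclidean_space \<Rightarrow> ereal"
  assumes hp: "proper_fun h" and hv: "convex_fun h" and gpos: "\<gamma> > 0"
    and pmin: "\<And>y. qf \<gamma> h v p \<le> qf \<gamma> h v y" and hz: "h z < \<infinity>"
  shows "h p = ereal (real_of_ereal (h p))"
    and "real_of_ereal (h p) \<le> real_of_ereal (h z) - inner (v - p) (z - p) / \<gamma>"
proof -
  have hz2: "h z > -\<infinity>" "h p > -\<infinity>" using hp unfolding proper_fun_def by auto
  then obtain hz' where hz': "h z = ereal hz'" using hz by (cases "h z") auto
  have "qf \<gamma> h v p \<le> qf \<gamma> h v z" by (rule pmin)
  hence "h p < \<infinity>" using hz' by (auto simp: qf_def)
  then obtain hp' where hp': "h p = ereal hp'" using hz2 by (cases "h p") auto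
  then show "h p = ereal (real_of_ereal (h p))" by simp
  define w where "w = z - p"
  have key: "hp' \<le> hz' - inner (v - p) w / \<gamma> + t * ((norm w)\<^sup>2 / (2 * \<gamma>))"
    if t: "0 < t" "t \<le> 1" for t
  proof -
    define y where "y = (1 - t) *\<^sub>R p + t *\<^sub>R z"
    have yv: "v - y = (v - p) - t *\<^sub>R w" by (simp add: y_def w_def algebra_simps)
    have "h y \<le> ereal (1 - t) * h p + ereal t * h z"
      using hv t unfolding convex_fun_def y_def by auto
    also have "\<dots> = ereal ((1 - t) * hp' + t * hz')" using hp' hz' by simp
    finally have hy: "h y \<le> ereal ((1 - t) * hp' + t * hz')" .
    have "qf \<gamma> h v p \<le> qf \<gamma> h v y" by (rule pmin)
    also have "\<dots> \<le> ereal (1 / (2 * \<gamma>) * (norm (v - y))\<^sup>2) + ereal ((1 - t) * hp' + t * hz')"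
      unfolding qf_def using hy by (intro add_mono) auto
    finally have "1 / (2 * \<gamma>) * (norm (v - p))\<^sup>2 + hp' \<le>
        1 / (2 * \<gamma>) * (norm (v - y))\<^sup>2 + ((1 - t) * hp' + t * hz')"
      using hp' by (simp add: qf_def)
    moreover have "(norm (v - y))\<^sup>2 = (norm (v - p))\<^sup>2 - 2 * t * inner (v - p) w + t\<^sup>2 * (norm w)\<^sup>2"
      unfolding yv norm_diff_sq by (simp add: power_mult_distrib)
    hence "1 / (2 * \<gamma>) * (norm (v - y))\<^sup>2 = 1 / (2 * \<gamma>) * (norm (v - p))\<^sup>2
        - t * (inner (v - p) w / \<gamma>) + t * (t * ((norm w)\<^sup>2 / (2 * \<gamma>)))"
      using gpos by (simp add: field_simps power2_eq_square)
    ultimately have "t * hp' \<le> t * hz' - t * (inner (v - p) w / \<gamma>) + t * (t * ((norm w)\<^sup>2 / (2 * \<gamma>)))"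
      by (simp add: algebra_simps)
    hence "t * hp' \<le> t * (hz' - inner (v - p) w / \<gamma> + t * ((norm w)\<^sup>2 / (2 * \<gamma>)))"
      by (simp add: algebra_simps)
    then show ?thesis using t by simp
  qed
  have "hp' \<le> hz' - inner (v - p) w / \<gamma>"
    by (rule small_t_ineq[OF key]) (use gpos in auto)
  then show "real_of_ereal (h p) \<le> real_of_ereal (h z) - inner (v - p) (z - p) / \<gamma>"
    using hp' hz' w_def by simp
qed


definition pcc :: "('a::euclidean_space \<Rightarrow> ereal) \<Rightarrow> bool" where
  "pcc h \<longleftrightarrow> proper_fun h \<and> closed_fun h \<and> convex_fun h"

lemma finite_lt_inf: assumes "h = ereal (real_of_ereal h)" shows "h < \<infinity>"
  by (subst assms) simp

lemma min_unique:
  fixes h :: "'a::euclidean_space \<Rightarrow> ereal"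
  assumes hp: "proper_fun h" and hv: "convex_fun h" and gpos: "\<gamma> > 0"
    and p1: "\<And>y. qf \<gamma> h v p1 \<le> qf \<gamma> h v y" and p2: "\<And>y. qf \<gamma> h v p2 \<le> qf \<gamma> h v y"
  shows "p1 = p2"
proof -
  obtain z where hz: "h z < \<infinity>" using hp unfolding proper_fun_def by auto
  have f2: "h p2 < \<infinity>" by (rule finite_lt_inf[OF prox_var_ineq(1)[OF hp hv gpos p2 hz]])
  have f1: "h p1 < \<infinity>" by (rule finite_lt_inf[OF prox_var_ineq(1)[OF hp hv gpos p1 hz]])
  have a: "real_of_ereal (h p1) \<le> real_of_ereal (h p2) - inner (v - p1) (p2 - p1) / \<gamma>"
    by (rule prox_var_ineq(2)[OF hp hv gpos p1 f2])
  have b: "real_of_ereal (h p2) \<le> real_of_ereal (h p1) - inner (v - p2) (p1 - p2) / \<gamma>"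
    by (rule prox_var_ineq(2)[OF hp hv gpos p2 f1])
  have "inner (v - p1) (p2 - p1) / \<gamma> + inner (v - p2) (p1 - p2) / \<gamma> \<le> 0" using a b by linarith
  hence "(inner (v - p1) (p2 - p1) + inner (v - p2) (p1 - p2)) / \<gamma> \<le> 0" by (simp add: add_divide_distrib)
  hence "inner (v - p1) (p2 - p1) + inner (v - p2) (p1 - p2) \<le> 0" using gpos
    by (simp add: divide_le_0_iff)
  moreover have "inner (v - p1) (p2 - p1) + inner (v - p2) (p1 - p2) = inner (p2 - p1) (p2 - p1)"
    by (simp add: inner_diff_left inner_diff_right inner_commute)
  ultimately have "inner (p2 - p1) (p2 - p1) \<le> 0" by simp
  hence "inner (p2 - p1) (p2 - p1) = 0" using inner_ge_zero[of "p2 - p1"] by linarith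
  then show ?thesis by simp
qed

lemma prox_min:
  fixes h :: "'a::euclidean_space \<Rightarrow> ereal"
  assumes "pcc h" and gpos: "\<gamma> > 0"
  shows "qf \<gamma> h v (prox \<gamma> h v) \<le> qf \<gamma> h v y"
proof -
  have hp: "proper_fun h" and hc: "closed_fun h" and hv: "convex_fun h" using assms by (auto simp: pcc_def)
  obtain p where pm: "\<And>y. qf \<gamma> h v p \<le> qf \<gamma> h v y" using prox_exists[OF hp hc hv gpos] by blast
  have "prox \<gamma> h v = p" unfolding prox_def
  proof (rule the_equality)
    show "\<forall>y. ereal (1 / (2 * \<gamma>) * (norm (v - p))\<^sup>2) + h p \<le> ereal (1 / (2 * \<gamma>) * (norm (v - y))\<^sup>2) + h y"
      using pm by (simp add: qf_def)
  next
    fix x assume "\<forall>y. ereal (1 / (2 * \<gamma>) * (norm (v - x))\<^sup>2) + h x \<le> ereal (1 / (2 * \<gamma>) * (norm (v - y))\<^sup>2) + h y"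
    hence "\<And>y. qf \<gamma> h v x \<le> qf \<gamma> h v y" by (simp add: qf_def)
    then show "x = p" using min_unique[OF hp hv gpos _ pm] by blast
  qed
  then show ?thesis using pm by simp
qed

lemma prox_finite:
  fixes h :: "'a::euclidean_space \<Rightarrow> ereal"
  assumes "pcc h" and gpos: "\<gamma> > 0"
  shows "h (prox \<gamma> h v) = ereal (real_of_ereal (h (prox \<gamma> h v)))"
proof -
  obtain z where hz: "h z < \<infinity>" using assms unfolding pcc_def proper_fun_def by auto
  have hp: "proper_fun h" and hv: "convex_fun h" using assms by (auto simp: pcc_def)
  show ?thesis by (rule prox_var_ineq(1)[OF hp hv gpos prox_min[OF assms] hz])
qed

lemma prox_ineq:
  fixes h :: "'a::euclidean_space \<Rightarrow> ereal"
  assumes "pcc h" and gpos: "\<gamma> > 0" and "h z < \<infinity>"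
  shows "real_of_ereal (h (prox \<gamma> h v)) \<le> real_of_ereal (h z) - inner (v - prox \<gamma> h v) (z - prox \<gamma> h v) / \<gamma>"
proof -
  have hp: "proper_fun h" and hv: "convex_fun h" using assms by (auto simp: pcc_def)
  show ?thesis by (rule prox_var_ineq(2)[OF hp hv gpos prox_min[OF assms(1,2)] assms(3)])
qed

lemma prox_nonexp:
  fixes h :: "'a::euclidean_space \<Rightarrow> ereal"
  assumes "pcc h" and gpos: "\<gamma> > 0"
  shows "norm (prox \<gamma> h v1 - prox \<gamma> h v2) \<le> norm (v1 - v2)"
proof -
  define p1 where "p1 = prox \<gamma> h v1"
  define p2 where "p2 = prox \<gamma> h v2"
  have f1: "h p1 < \<infinity>" "h p2 < \<infinity>" unfolding p1_def p2_def
    by (rule finite_lt_inf[OF prox_finite[OF assms]])+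
  have a: "real_of_ereal (h p1) \<le> real_of_ereal (h p2) - inner (v1 - p1) (p2 - p1) / \<gamma>"
    unfolding p1_def by (rule prox_ineq[OF assms f1(2)])
  have b: "real_of_ereal (h p2) \<le> real_of_ereal (h p1) - inner (v2 - p2) (p1 - p2) / \<gamma>"
    unfolding p2_def by (rule prox_ineq[OF assms f1(1)])
  have "(inner (v1 - p1) (p2 - p1) + inner (v2 - p2) (p1 - p2)) / \<gamma> \<le> 0" using a b
    by (simp add: add_divide_distrib)
  hence "inner (v1 - p1) (p2 - p1) + inner (v2 - p2) (p1 - p2) \<le> 0" using gpos
    by (simp add: divide_le_0_iff)
  moreover have "inner (v1 - p1) (p2 - p1) + inner (v2 - p2) (p1 - p2)
      = inner (p1 - p2) (p1 - p2) - inner (v1 - v2) (p1 - p2)"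
    by (simp add: inner_diff_left inner_diff_right inner_commute)
  ultimately have "(norm (p1 - p2))\<^sup>2 \<le> inner (v1 - v2) (p1 - p2)" by (simp add: power2_norm_eq_inner)
  also have "\<dots> \<le> norm (v1 - v2) * norm (p1 - p2)" by (rule norm_cauchy_schwarz)
  finally have "norm (p1 - p2) * norm (p1 - p2) \<le> norm (v1 - v2) * norm (p1 - p2)"
    by (simp add: power2_eq_square)
  hence "norm (p1 - p2) \<le> norm (v1 - v2)"
    by (cases "norm (p1 - p2) = 0") (auto simp: mult_le_cancel_right)
  then show ?thesis by (simp add: p1_def p2_def)
qed


lemma f_descent:
  fixes f :: "'a::euclidean_space \<Rightarrow> real"
  assumes fd: "\<And>x. (f has_derivative (\<lambda>v. df x \<bullet> v)) (at x)"
    and ls: "\<And>x y. norm (df x - df y) \<le> L * norm (x - y)" and L0: "L \<ge> 0"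
  shows "f y \<le> f x + df x \<bullet> (y - x) + L * (norm (y - x))\<^sup>2"
proof -
  define \<phi> where "\<phi> = (\<lambda>s::real. f (x + s *\<^sub>R (y - x)))"
  have der: "(\<phi> has_derivative (\<lambda>t. df (x + s *\<^sub>R (y - x)) \<bullet> (t *\<^sub>R (y - x)))) (at s)" for s
  proof -
    have "((\<lambda>s::real. x + s *\<^sub>R (y - x)) has_derivative (\<lambda>t. t *\<^sub>R (y - x))) (at s)"
      by (auto intro!: derivative_eq_intros)
    from has_derivative_compose[OF this fd] show ?thesis unfolding \<phi>_def by simp
  qed
  have cont: "continuous_on {0..1} \<phi>"
    using der by (meson continuous_at_imp_continuous_on has_derivative_continuous)
  obtain \<xi> where xi: "0 < \<xi>" "\<xi> < 1" and eq: "\<phi> 1 - \<phi> 0 = df (x + \<xi> *\<^sub>R (y - x)) \<bullet> (1 *\<^sub>R (y - x))"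
  proof -
    have "0 < (1::real)" by simp
    from mvt[OF this cont, of "\<lambda>s t. df (x + s *\<^sub>R (y - x)) \<bullet> (t *\<^sub>R (y - x))"] der
    obtain \<xi> where "0 < \<xi>" "\<xi> < 1" "\<phi> 1 - \<phi> 0 = df (x + \<xi> *\<^sub>R (y - x)) \<bullet> ((1 - 0) *\<^sub>R (y - x))"
      by blast
    then show ?thesis using that by simp
  qed
  have "df (x + \<xi> *\<^sub>R (y - x)) \<bullet> (y - x) = df x \<bullet> (y - x) + (df (x + \<xi> *\<^sub>R (y - x)) - df x) \<bullet> (y - x)"
    by (simp add: inner_diff_left)
  also have "(df (x + \<xi> *\<^sub>R (y - x)) - df x) \<bullet> (y - x) \<le> norm (df (x + \<xi> *\<^sub>R (y - x)) - df x) * norm (y - x)"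
    by (rule norm_cauchy_schwarz)
  also have "\<dots> \<le> (L * norm (\<xi> *\<^sub>R (y - x))) * norm (y - x)"
    using ls[of "x + \<xi> *\<^sub>R (y - x)" x] by (intro mult_right_mono) auto
  also have "\<dots> = \<xi> * (L * (norm (y - x))\<^sup>2)" using xi by (simp add: power2_eq_square)
  also have "\<dots> \<le> L * (norm (y - x))\<^sup>2" using xi L0 by (simp add: mult_left_le_one_le)
  finally show ?thesis using eq unfolding \<phi>_def by simp
qed

lemma env_descent:
  fixes g :: "'a::euclidean_space \<Rightarrow> real"
  assumes zm: "\<And>w x. 1 / (2 * lam) * (norm (w - \<zeta> lam w))\<^sup>2 + g (\<zeta> lam w) \<le> 1 / (2 * lam) * (norm (w - x))\<^sup>2 + g x"
  shows "env lam g \<zeta> y \<le> env lam g \<zeta> x + ((1 / lam) *\<^sub>R (x - \<zeta> lam x)) \<bullet> (y - x) + 1 / (2 * lam) * (norm (y - x))\<^sup>2"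
proof -
  have "env lam g \<zeta> y \<le> 1 / (2 * lam) * (norm (y - \<zeta> lam x))\<^sup>2 + g (\<zeta> lam x)"
    unfolding env_def by (rule zm)
  moreover have "y - \<zeta> lam x = (x - \<zeta> lam x) + (y - x)" by simp
  hence "(norm (y - \<zeta> lam x))\<^sup>2 = (norm (x - \<zeta> lam x))\<^sup>2 + 2 * ((x - \<zeta> lam x) \<bullet> (y - x)) + (norm (y - x))\<^sup>2"
    using norm_add_sq by metis
  ultimately show ?thesis unfolding env_def by (simp add: algebra_simps add_divide_distrib)
qed


lemma fin_Pi:
  assumes "finite A" "finite (set_pmf D)"
  shows "finite (set_pmf (Pi_pmf A d (\<lambda>_. D)))"
  using assms by (auto simp: set_Pi_pmf intro!: finite_PiE_dflt)

lemma fubini_pmf: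
  fixes F :: "'a \<times> 'b \<Rightarrow> real"
  assumes p: "finite (set_pmf p)" and q: "finite (set_pmf q)"
  shows "measure_pmf.expectation (pair_pmf p q) F
       = measure_pmf.expectation p (\<lambda>x. measure_pmf.expectation q (\<lambda>y. F (x, y)))"
proof -
  have "measure_pmf.expectation (pair_pmf p q) F = (\<Sum>z\<in>set_pmf p \<times> set_pmf q. F z * pmf (pair_pmf p q) z)"
    by (rule integral_measure_pmf_real) (auto simp: p q)
  also have "\<dots> = (\<Sum>x\<in>set_pmf p. \<Sum>y\<in>set_pmf q. F (x, y) * (pmf p x * pmf q y))"
  proof -
    have "(\<Sum>z\<in>set_pmf p \<times> set_pmf q. F z * pmf (pair_pmf p q) z)
        = (\<Sum>z\<in>set_pmf p \<times> set_pmf q. F (fst z, snd z) * (pmf p (fst z) * pmf q (snd z)))"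
      by (intro sum.cong refl) (auto simp: pmf_pair)
    also have "\<dots> = (\<Sum>x\<in>set_pmf p. \<Sum>y\<in>set_pmf q. F (x, y) * (pmf p x * pmf q y))"
      by (simp add: sum.cartesian_product case_prod_beta)
    finally show ?thesis .
  qed
  also have "\<dots> = (\<Sum>x\<in>set_pmf p. (\<Sum>y\<in>set_pmf q. F (x, y) * pmf q y) * pmf p x)"
    by (intro sum.cong refl) (simp add: sum_distrib_left sum_distrib_right mult_ac)
  also have "\<dots> = (\<Sum>x\<in>set_pmf p. measure_pmf.expectation q (\<lambda>y. F (x, y)) * pmf p x)"
    by (intro sum.cong refl, subst integral_measure_pmf_real[where A = "set_pmf q"]) (auto simp: q)
  also have "\<dots> = measure_pmf.expectation p (\<lambda>x. measure_pmf.expectation q (\<lambda>y. F (x, y)))"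
    by (rule integral_measure_pmf_real[symmetric]) (auto simp: p)
  finally show ?thesis .
qed

lemma fubini_pmf2:
  fixes F :: "'a \<times> 'b \<Rightarrow> real"
  assumes p: "finite (set_pmf p)" and q: "finite (set_pmf q)"
  shows "measure_pmf.expectation (pair_pmf p q) F
       = measure_pmf.expectation q (\<lambda>y. measure_pmf.expectation p (\<lambda>x. F (x, y)))"
proof -
  have "measure_pmf.expectation (pair_pmf p q) F
      = measure_pmf.expectation (pair_pmf q p) (\<lambda>z. F (snd z, fst z))"
    by (subst pair_commute_pmf) (simp add: case_prod_beta)
  also have "\<dots> = measure_pmf.expectation q (\<lambda>y. measure_pmf.expectation p (\<lambda>x. F (x, y)))"
    by (subst fubini_pmf[OF q p]) simp
  finally show ?thesis .
qed

lemma PL: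
  fixes D :: "'b pmf" and X :: "('i \<Rightarrow> 'b) \<Rightarrow> 'x" and Y :: "'x \<Rightarrow> ('j \<Rightarrow> 'b) \<Rightarrow> real"
    and hm :: "'j \<Rightarrow> 'i"
  assumes I: "finite I" and BI: "B \<subseteq> I" and D: "finite (set_pmf D)" and bij: "bij_betw hm J B"
    and J: "finite J" and out: "\<And>x. x \<notin> J \<Longrightarrow> hm x \<notin> I"
    and dep: "\<And>\<omega> \<omega>'. (\<And>i. i \<in> I - B \<Longrightarrow> \<omega> i = \<omega>' i) \<Longrightarrow> X \<omega> = X \<omega>'"
  shows "measure_pmf.expectation (Pi_pmf I d (\<lambda>_. D)) (\<lambda>\<omega>. Y (X \<omega>) (\<omega> \<circ> hm))
       = measure_pmf.expectation (Pi_pmf I d (\<lambda>_. D))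
           (\<lambda>\<omega>. measure_pmf.expectation (Pi_pmf J d (\<lambda>_. D)) (\<lambda>u. Y (X \<omega>) u))"
proof -
  define A where "A = I - B"
  have IAB: "I = A \<union> B" and dis: "A \<inter> B = {}" using BI by (auto simp: A_def)
  have fA: "finite A" and fB: "finite B" using I BI by (auto simp: A_def intro: finite_subset)
  define mrg :: "('i \<Rightarrow> 'b) \<times> ('i \<Rightarrow> 'b) \<Rightarrow> 'i \<Rightarrow> 'b" where
    "mrg = (\<lambda>(f,g) x. if x \<in> A then f x else g x)"
  have PI: "Pi_pmf I d (\<lambda>_. D) = map_pmf mrg (pair_pmf (Pi_pmf A d (\<lambda>_. D)) (Pi_pmf B d (\<lambda>_. D)))"
    unfolding IAB mrg_def by (rule Pi_pmf_union[OF fA fB dis])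
  define X' where "X' f = X (mrg (f, \<lambda>_. d))" for f
  have Xm: "X (mrg (f, g)) = X' f" for f g
    unfolding X'_def by (rule dep) (auto simp: mrg_def A_def)
  have hmm: "mrg (f, g) \<circ> hm = g \<circ> hm" for f g
  proof
    fix x
    have "hm x \<notin> A"
    proof (cases "x \<in> J")
      case True then have "hm x \<in> B" using bij bij_betwE by blast
      then show ?thesis using dis by auto
    next
      case False then show ?thesis using out IAB by auto
    qed
    then show "(mrg (f, g) \<circ> hm) x = (g \<circ> hm) x" by (simp add: mrg_def)
  qed
  have PJ: "Pi_pmf J d (\<lambda>_. D) = map_pmf (\<lambda>g. g \<circ> hm) (Pi_pmf B d (\<lambda>_. D))"
    by (rule Pi_pmf_bij_betw[OF J bij]) (use out BI in auto)
  have fPA: "finite (set_pmf (Pi_pmf A d (\<lambda>_. D)))" by (rule fin_Pi[OF fA D])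
  have fPB: "finite (set_pmf (Pi_pmf B d (\<lambda>_. D)))" by (rule fin_Pi[OF fB D])
  have "measure_pmf.expectation (Pi_pmf I d (\<lambda>_. D)) (\<lambda>\<omega>. Y (X \<omega>) (\<omega> \<circ> hm))
      = measure_pmf.expectation (pair_pmf (Pi_pmf A d (\<lambda>_. D)) (Pi_pmf B d (\<lambda>_. D)))
          (\<lambda>z. Y (X' (fst z)) (snd z \<circ> hm))"
    unfolding PI by (simp add: case_prod_beta Xm hmm[of "fst _" "snd _", simplified]
        del: comp_apply) (metis Xm hmm prod.collapse)
  also have "\<dots> = measure_pmf.expectation (Pi_pmf A d (\<lambda>_. D))
       (\<lambda>f. measure_pmf.expectation (Pi_pmf B d (\<lambda>_. D)) (\<lambda>g. Y (X' f) (g \<circ> hm)))"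
    by (subst fubini_pmf[OF fPA fPB]) simp
  also have "\<dots> = measure_pmf.expectation (Pi_pmf A d (\<lambda>_. D))
       (\<lambda>f. measure_pmf.expectation (Pi_pmf J d (\<lambda>_. D)) (\<lambda>u. Y (X' f) u))"
    unfolding PJ by simp
  also have "\<dots> = measure_pmf.expectation (pair_pmf (Pi_pmf A d (\<lambda>_. D)) (Pi_pmf B d (\<lambda>_. D)))
       (\<lambda>z. measure_pmf.expectation (Pi_pmf J d (\<lambda>_. D)) (\<lambda>u. Y (X' (fst z)) u))"
    by (rule expectation_pair_pmf_fst[symmetric])
  also have "\<dots> = measure_pmf.expectation (Pi_pmf I d (\<lambda>_. D))
           (\<lambda>\<omega>. measure_pmf.expectation (Pi_pmf J d (\<lambda>_. D)) (\<lambda>u. Y (X \<omega>) u))"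
    unfolding PI by (simp add: case_prod_beta) (metis Xm prod.collapse)
  finally show ?thesis .
qed


lemma exp_unif:
  fixes F :: "nat \<Rightarrow> real"
  assumes "n > 0"
  shows "measure_pmf.expectation (pmf_of_set {1..n}) F = (\<Sum>j=1..n. F j) / real n"
  using assms by (subst integral_pmf_of_set) auto

lemma VL:
  fixes a :: "nat \<Rightarrow> 'a::real_inner" and n :: nat
  assumes npos: "n > 0"
  defines "abar \<equiv> (1 / real n) *\<^sub>R (\<Sum>j=1..n. a j)"
  shows "measure_pmf.expectation (Pi_pmf {1..b} d (\<lambda>_. pmf_of_set {1..n}))
           (\<lambda>u. (norm (\<Sum>i=1..b. (a (u i) - abar)))\<^sup>2)
         = real b * ((\<Sum>j=1..n. (norm (a j - abar))\<^sup>2) / real n)"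
proof (induction b)
  case 0
  then show ?case by simp
next
  case (Suc b)
  define U where "U = pmf_of_set {1..n}"
  define Q where "Q = Pi_pmf {1..b} d (\<lambda>_. U)"
  define \<sigma> where "\<sigma> = (\<Sum>j=1..n. (norm (a j - abar))\<^sup>2) / real n"
  define Sf where "Sf f = (\<Sum>i=1..b. (a (f i) - abar))" for f :: "nat \<Rightarrow> nat"
  have fU: "finite (set_pmf U)" using npos by (simp add: U_def)
  have fQ: "finite (set_pmf Q)" unfolding Q_def by (rule fin_Pi[OF _ fU]) simp
  have sumc: "(\<Sum>j=1..n. (a j - abar)) = 0"
    using npos by (simp add: abar_def sum_subtractf sum_constant_scaleR)
  have PS: "Pi_pmf {1..Suc b} d (\<lambda>_. U) = map_pmf (\<lambda>(y, f). f(Suc b := y)) (pair_pmf U Q)"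
  proof -
    have "{1..Suc b} = insert (Suc b) {1..b}" by auto
    then show ?thesis unfolding Q_def by (simp add: Pi_pmf_insert)
  qed
  have sumeq: "(\<Sum>i=1..Suc b. (a ((f(Suc b := y)) i) - abar)) = Sf f + (a y - abar)" for f y
  proof -
    have "(\<Sum>i=1..Suc b. (a ((f(Suc b := y)) i) - abar)) = (\<Sum>i=1..b. (a ((f(Suc b := y)) i) - abar)) + (a y - abar)"
      by simp
    also have "(\<Sum>i=1..b. (a ((f(Suc b := y)) i) - abar)) = Sf f"
      unfolding Sf_def by (intro sum.cong) auto
    finally show ?thesis .
  qed
  have inner0: "measure_pmf.expectation U (\<lambda>y. (norm (Sf f + (a y - abar)))\<^sup>2) = (norm (Sf f))\<^sup>2 + \<sigma>" for f
  proof -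
    have "measure_pmf.expectation U (\<lambda>y. (norm (Sf f + (a y - abar)))\<^sup>2)
        = (\<Sum>j=1..n. (norm (Sf f))\<^sup>2 + 2 * inner (Sf f) (a j - abar) + (norm (a j - abar))\<^sup>2) / real n"
      unfolding U_def exp_unif[OF npos]
      by (intro arg_cong[where f="\<lambda>x. x / real n"] sum.cong refl)
         (simp add: power2_norm_eq_inner inner_add_left inner_add_right inner_commute)
    also have "\<dots> = (real n * (norm (Sf f))\<^sup>2 + 2 * inner (Sf f) (\<Sum>j=1..n. (a j - abar)) + (\<Sum>j=1..n. (norm (a j - abar))\<^sup>2)) / real n"
      by (simp add: sum.distrib inner_sum_right sum_distrib_left)
    also have "\<dots> = (norm (Sf f))\<^sup>2 + \<sigma>" using npos by (simp only: sumc) (simp add: \<sigma>_def add_divide_distrib)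
    finally show ?thesis .
  qed
  have "measure_pmf.expectation (Pi_pmf {1..Suc b} d (\<lambda>_. U)) (\<lambda>u. (norm (\<Sum>i=1..Suc b. (a (u i) - abar)))\<^sup>2)
      = measure_pmf.expectation (pair_pmf U Q) (\<lambda>z. (norm (Sf (snd z) + (a (fst z) - abar)))\<^sup>2)"
    unfolding PS by (simp add: case_prod_beta sumeq Sf_def del: One_nat_def)
  also have "\<dots> = measure_pmf.expectation Q (\<lambda>f. measure_pmf.expectation U (\<lambda>y. (norm (Sf f + (a y - abar)))\<^sup>2))"
    by (subst fubini_pmf2[OF fU fQ]) simp
  also have "\<dots> = measure_pmf.expectation Q (\<lambda>f. (norm (Sf f))\<^sup>2 + \<sigma>)"
    by (simp add: inner0)
  also have "\<dots> = measure_pmf.expectation Q (\<lambda>f. (norm (Sf f))\<^sup>2) + \<sigma>"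
    using fQ by (simp add: integrable_measure_pmf_finite)
  also have "measure_pmf.expectation Q (\<lambda>f. (norm (Sf f))\<^sup>2) = real b * \<sigma>"
    using Suc.IH unfolding Q_def U_def Sf_def \<sigma>_def by simp
  finally show ?case unfolding U_def \<sigma>_def by (simp add: algebra_simps add_divide_distrib)
qed

lemma var_le_second:
  fixes a :: "nat \<Rightarrow> 'a::real_inner" and n :: nat
  assumes npos: "n > 0"
  defines "abar \<equiv> (1 / real n) *\<^sub>R (\<Sum>j=1..n. a j)"
  shows "(\<Sum>j=1..n. (norm (a j - abar))\<^sup>2) \<le> (\<Sum>j=1..n. (norm (a j))\<^sup>2)"
proof -
  have s: "(\<Sum>j=1..n. a j) = real n *\<^sub>R abar" using npos by (simp add: abar_def)
  have "(\<Sum>j=1..n. (norm (a j - abar))\<^sup>2) = (\<Sum>j=1..n. (norm (a j))\<^sup>2 - 2 * inner (a j) abar + (norm abar)\<^sup>2)"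
    by (intro sum.cong refl) (simp add: power2_norm_eq_inner inner_diff_left inner_diff_right inner_commute algebra_simps)
  also have "\<dots> = (\<Sum>j=1..n. (norm (a j))\<^sup>2) - 2 * inner (\<Sum>j=1..n. a j) abar + real n * (norm abar)\<^sup>2"
    by (simp add: sum.distrib sum_subtractf inner_sum_left sum_distrib_left)
  also have "\<dots> = (\<Sum>j=1..n. (norm (a j))\<^sup>2) - real n * (norm abar)\<^sup>2"
    by (simp only: s) (simp add: power2_norm_eq_inner)
  finally show ?thesis by simp
qed


locale vrs =
  fixes n :: nat and L :: real and f :: "nat \<Rightarrow> 'a::euclidean_space \<Rightarrow> real" and df :: "nat \<Rightarrow> 'a \<Rightarrow> 'a"
    and g :: "'a \<Rightarrow> real" and \<zeta> :: "real \<Rightarrow> 'a \<Rightarrow> 'a" and h :: "'a \<Rightarrow> ereal" and lam :: real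
  assumes n_pos: "n > 0"
    and f_grad: "\<And>j x. j \<in> {1..n} \<Longrightarrow> (f j has_derivative (\<lambda>v. df j x \<bullet> v)) (at x)"
    and f_smooth: "\<And>j x y. j \<in> {1..n} \<Longrightarrow> norm (df j x - df j y) \<le> L * norm (x - y)"
    and \<zeta>_min: "\<And>w x. 1 / (2 * lam) * (norm (w - \<zeta> lam w))\<^sup>2 + g (\<zeta> lam w) \<le> 1 / (2 * lam) * (norm (w - x))\<^sup>2 + g x"
    and hpcc: "pcc h" and lam_pos: "lam > 0" and L_nn: "L \<ge> 0"
begin

definition "Fs w = (1 / real n) * (\<Sum>j=1..n. f j w) + env lam g \<zeta> w"
definition "gradF w = full_grad n df w + (1 / lam) *\<^sub>R (w - \<zeta> lam w)"
definition "hr w = real_of_ereal (h w)"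
definition "Lm = L + 1 / lam"
definition "gam = 1 / (6 * Lm)"
definition "stepv b w wt u = (1 / real b) *\<^sub>R (\<Sum>i=1..b. df (u i) w - df (u i) wt) + full_grad n df wt
     + (1 / lam) *\<^sub>R (w - \<zeta> lam w)"
definition "stepf b w wt u = prox gam h (w - gam *\<^sub>R stepv b w wt u)"
definition "Gm w = (1 / gam) *\<^sub>R (w - prox gam h (w - gam *\<^sub>R gradF w))"

lemma Lm_pos: "Lm > 0" using L_nn lam_pos by (simp add: Lm_def add_nonneg_pos)
lemma gam_pos: "gam > 0" using Lm_pos by (simp add: gam_def)
lemma gam_Lm: "gam * Lm = 1 / 6" using Lm_pos by (simp add: gam_def)
lemma gam_L: "gam * L \<le> 1 / 6"
proof -
  have "gam * L \<le> gam * Lm" using gam_pos lam_pos by (intro mult_left_mono) (auto simp: Lm_def)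
  then show ?thesis using gam_Lm by simp
qed

lemma Fs_descent: "Fs y \<le> Fs x + gradF x \<bullet> (y - x) + Lm * (norm (y - x))\<^sup>2"
proof -
  have fj: "f j y \<le> f j x + df j x \<bullet> (y - x) + L * (norm (y - x))\<^sup>2" if "j \<in> {1..n}" for j
    by (rule f_descent[OF f_grad[OF that] f_smooth[OF that] L_nn])
  have "(\<Sum>j=1..n. f j y) \<le> (\<Sum>j=1..n. f j x + df j x \<bullet> (y - x) + L * (norm (y - x))\<^sup>2)"
    by (rule sum_mono) (use fj in auto)
  also have "\<dots> = (\<Sum>j=1..n. f j x) + (\<Sum>j=1..n. df j x) \<bullet> (y - x) + real n * (L * (norm (y - x))\<^sup>2)"
    by (simp add: sum.distrib inner_sum_left)
  finally have s: "(1 / real n) * (\<Sum>j=1..n. f j y) \<le> (1 / real n) * (\<Sum>j=1..n. f j x)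
      + full_grad n df x \<bullet> (y - x) + L * (norm (y - x))\<^sup>2"
    using n_pos by (simp add: full_grad_def field_simps)
  have e: "env lam g \<zeta> y \<le> env lam g \<zeta> x + ((1 / lam) *\<^sub>R (x - \<zeta> lam x)) \<bullet> (y - x) + 1 / (2 * lam) * (norm (y - x))\<^sup>2"
    by (rule env_descent) (rule \<zeta>_min)
  have "1 / (2 * lam) * (norm (y - x))\<^sup>2 \<le> 1 / lam * (norm (y - x))\<^sup>2"
    using lam_pos by (intro mult_right_mono) (auto simp: field_simps)
  then show ?thesis using s e unfolding Fs_def gradF_def Lm_def
    by (simp add: inner_add_left algebra_simps)
qed

lemma young: fixes e d :: "'a" assumes "a > 0"
  shows "- (e \<bullet> d) \<le> (norm e)\<^sup>2 / (2 * a) + a / 2 * (norm d)\<^sup>2"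
proof -
  have "0 \<le> (norm (e + a *\<^sub>R d))\<^sup>2" by simp
  also have "\<dots> = (norm e)\<^sup>2 + 2 * a * (e \<bullet> d) + a\<^sup>2 * (norm d)\<^sup>2"
    by (simp add: norm_add_sq power_mult_distrib)
  finally have i: "- (2 * a * (e \<bullet> d)) \<le> (norm e)\<^sup>2 + a\<^sup>2 * (norm d)\<^sup>2" by simp
  have "- (e \<bullet> d) = (- (2 * a * (e \<bullet> d))) / (2 * a)" using assms by simp
  also have "\<dots> \<le> ((norm e)\<^sup>2 + a\<^sup>2 * (norm d)\<^sup>2) / (2 * a)"
    using assms i by (intro divide_right_mono) auto
  also have "\<dots> = (norm e)\<^sup>2 / (2 * a) + a / 2 * (norm d)\<^sup>2"
    using assms by (simp add: field_simps power2_eq_square)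
  finally show ?thesis .
qed

lemma young2: fixes d z :: "'a" assumes "m > 0"
  shows "(norm (d + z))\<^sup>2 \<le> (1 + m) * (norm d)\<^sup>2 + (1 + 1 / m) * (norm z)\<^sup>2"
proof -
  have "0 \<le> (norm (m *\<^sub>R d - z))\<^sup>2" by simp
  also have "\<dots> = m\<^sup>2 * (norm d)\<^sup>2 - 2 * m * (d \<bullet> z) + (norm z)\<^sup>2"
    by (simp add: norm_diff_sq power_mult_distrib)
  finally have i: "2 * m * (d \<bullet> z) \<le> m\<^sup>2 * (norm d)\<^sup>2 + (norm z)\<^sup>2" by simp
  have "2 * (d \<bullet> z) = (2 * m * (d \<bullet> z)) / m" using assms by simp
  also have "\<dots> \<le> (m\<^sup>2 * (norm d)\<^sup>2 + (norm z)\<^sup>2) / m"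
    using assms i by (intro divide_right_mono) auto
  also have "\<dots> = m * (norm d)\<^sup>2 + (norm z)\<^sup>2 / m"
    using assms by (simp add: field_simps power2_eq_square)
  finally have "2 * (d \<bullet> z) \<le> m * (norm d)\<^sup>2 + (norm z)\<^sup>2 / m" .
  moreover have "(norm (d + z))\<^sup>2 = (norm d)\<^sup>2 + 2 * (d \<bullet> z) + (norm z)\<^sup>2" by (rule norm_add_sq)
  ultimately show ?thesis by (simp add: algebra_simps)
qed

lemma DL:
  assumes hw: "h w < \<infinity>" and c0: "c \<ge> 0" and cm: "c * (1 + real m) \<le> 1 / (4 * gam)" and mpos: "m > 0"
  shows "h (stepf b w wt u) < \<infinity>"
    and "hr (stepf b w wt u) + Fs (stepf b w wt u) + c * (norm (stepf b w wt u - wt))\<^sup>2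
      \<le> hr w + Fs w + c * (1 + 1 / real m) * (norm (w - wt))\<^sup>2
         + (4 * gam / 3) * (norm (stepv b w wt u - gradF w))\<^sup>2 - (gam / 6) * (norm (Gm w))\<^sup>2"
proof -
  define y where "y = stepf b w wt u"
  define v where "v = stepv b w wt u"
  define e where "e = v - gradF w"
  define d where "d = y - w"
  have gp: "gam > 0" by (rule gam_pos)
  show "h (stepf b w wt u) < \<infinity>" unfolding stepf_def
    by (rule finite_lt_inf[OF prox_finite[OF hpcc gp]])
  have yprox: "y = prox gam h (w - gam *\<^sub>R v)" by (simp add: y_def v_def stepf_def)
  have p1: "hr y \<le> hr w - inner (w - gam *\<^sub>R v - y) (w - y) / gam"
    unfolding hr_def yprox by (rule prox_ineq[OF hpcc gp hw])
  have "inner (w - gam *\<^sub>R v - y) (w - y) = (norm d)\<^sup>2 + gam * (v \<bullet> d)"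
    by (simp add: d_def power2_norm_eq_inner inner_diff_left inner_diff_right inner_commute algebra_simps)
  hence p1': "hr y \<le> hr w - (norm d)\<^sup>2 / gam - v \<bullet> d"
    using p1 gp by (simp add: add_divide_distrib)
  have p2: "Fs y \<le> Fs w + gradF w \<bullet> d + Lm * (norm d)\<^sup>2"
    using Fs_descent[of y w] by (simp add: d_def)
  have p3: "- (e \<bullet> d) \<le> (norm e)\<^sup>2 / (2 * (1 / (2 * gam))) + (1 / (2 * gam)) / 2 * (norm d)\<^sup>2"
    by (rule young) (use gp in simp)
  have ve: "v \<bullet> d = gradF w \<bullet> d + e \<bullet> d" by (simp add: e_def inner_diff_left)
  define D where "D = (norm d)\<^sup>2 / gam"
  define E where "E = gam * (norm e)\<^sup>2"
  have LmD: "Lm * (norm d)\<^sup>2 = D / 6" using gam_Lm gp by (simp add: D_def field_simps)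
  have p3': "- (e \<bullet> d) \<le> E + D / 4" using p3 gp by (simp add: E_def D_def field_simps)
  have A: "hr y + Fs y \<le> hr w + Fs w + E - 7 / 12 * D"
    using p1' p2 p3' ve LmD by (simp add: D_def)
  have B0: "(norm (y - wt))\<^sup>2 \<le> (1 + real m) * (norm d)\<^sup>2 + (1 + 1 / real m) * (norm (w - wt))\<^sup>2"
    using young2[of "real m" d "w - wt"] mpos by (simp add: d_def)
  have "c * (1 + real m) * (norm d)\<^sup>2 \<le> 1 / (4 * gam) * (norm d)\<^sup>2"
    using cm by (intro mult_right_mono) auto
  hence B: "c * (norm (y - wt))\<^sup>2 \<le> D / 4 + c * (1 + 1 / real m) * (norm (w - wt))\<^sup>2"
    using mult_left_mono[OF B0 c0] by (simp add: D_def algebra_simps)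
  define yb where "yb = prox gam h (w - gam *\<^sub>R gradF w)"
  have "norm (y - yb) \<le> norm ((w - gam *\<^sub>R v) - (w - gam *\<^sub>R gradF w))"
    unfolding yprox yb_def by (rule prox_nonexp[OF hpcc gp])
  also have "\<dots> = gam * norm e" using gp by (simp add: e_def scaleR_diff_right[symmetric] norm_minus_commute)
  finally have "norm (w - yb) \<le> norm d + gam * norm e"
    using norm_triangle_ineq[of "w - y" "y - yb"] by (simp add: d_def norm_minus_commute)
  hence "norm (w - yb) / gam \<le> (norm d + gam * norm e) / gam"
    using gp by (intro divide_right_mono) auto
  moreover have "norm (Gm w) = norm (w - yb) / gam" using gp
    by (simp add: Gm_def yb_def divide_inverse_commute)
  ultimately have "norm (Gm w) \<le> norm d / gam + norm e"
    using gp by (simp add: add_divide_distrib)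
  hence "(norm (Gm w))\<^sup>2 \<le> (norm d / gam + norm e)\<^sup>2" by (intro power_mono) auto
  also have "\<dots> \<le> 2 * (norm d / gam)\<^sup>2 + 2 * (norm e)\<^sup>2"
    by (smt (verit) power2_diff power2_sum zero_le_power2)
  finally have "gam / 6 * (norm (Gm w))\<^sup>2 \<le> gam / 6 * (2 * (norm d / gam)\<^sup>2 + 2 * (norm e)\<^sup>2)"
    using gp by (intro mult_left_mono) auto
  also have "\<dots> = D / 3 + E / 3" using gp by (simp add: D_def E_def field_simps power2_eq_square)
  finally have C: "gam / 6 * (norm (Gm w))\<^sup>2 \<le> D / 3 + E / 3" .
  have "4 * gam / 3 * (norm e)\<^sup>2 = 4 / 3 * E" by (simp add: E_def)
  then show "hr (stepf b w wt u) + Fs (stepf b w wt u) + c * (norm (stepf b w wt u - wt))\<^sup>2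
      \<le> hr w + Fs w + c * (1 + 1 / real m) * (norm (w - wt))\<^sup>2
         + (4 * gam / 3) * (norm (stepv b w wt u - gradF w))\<^sup>2 - (gam / 6) * (norm (Gm w))\<^sup>2"
    using A B C unfolding y_def[symmetric] v_def[symmetric] e_def[symmetric] by linarith
qed

end


context vrs begin

lemma stepv_err:
  fixes w wt :: 'a and u :: "nat \<Rightarrow> nat"
  assumes bpos: "b > 0"
  defines "a \<equiv> (\<lambda>j. df j w - df j wt)"
  defines "abar \<equiv> (1 / real n) *\<^sub>R (\<Sum>j=1..n. a j)"
  shows "stepv b w wt u - gradF w = (1 / real b) *\<^sub>R (\<Sum>i=1..b. (a (u i) - abar))"
proof -
  have ab: "abar = full_grad n df w - full_grad n df wt"
    by (simp add: abar_def a_def full_grad_def sum_subtractf scaleR_diff_right)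
  have "(1 / real b) *\<^sub>R (\<Sum>i=1..b. (a (u i) - abar)) = (1 / real b) *\<^sub>R (\<Sum>i=1..b. a (u i)) - abar"
    using bpos by (simp add: sum_subtractf scaleR_diff_right sum_constant_scaleR)
  then show ?thesis
    by (simp add: stepv_def gradF_def ab a_def)
qed

lemma VLb:
  assumes bpos: "b > 0"
  shows "measure_pmf.expectation (Pi_pmf {1..b} d (\<lambda>_. pmf_of_set {1..n}))
           (\<lambda>u. (norm (stepv b w wt u - gradF w))\<^sup>2) \<le> L\<^sup>2 / real b * (norm (w - wt))\<^sup>2"
proof -
  define a where "a = (\<lambda>j. df j w - df j wt)"
  define abar where "abar = (1 / real n) *\<^sub>R (\<Sum>j=1..n. a j)"
  have "measure_pmf.expectation (Pi_pmf {1..b} d (\<lambda>_. pmf_of_set {1..n}))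
           (\<lambda>u. (norm (stepv b w wt u - gradF w))\<^sup>2)
      = measure_pmf.expectation (Pi_pmf {1..b} d (\<lambda>_. pmf_of_set {1..n}))
           (\<lambda>u. (1 / real b)\<^sup>2 * (norm (\<Sum>i=1..b. (a (u i) - abar)))\<^sup>2)"
    by (intro Bochner_Integration.integral_cong refl)
       (simp add: stepv_err[OF bpos, of w wt] a_def abar_def power_mult_distrib power_divide)
  also have "\<dots> = (1 / real b)\<^sup>2 * measure_pmf.expectation (Pi_pmf {1..b} d (\<lambda>_. pmf_of_set {1..n}))
           (\<lambda>u. (norm (\<Sum>i=1..b. (a (u i) - abar)))\<^sup>2)"
    by (rule integral_mult_right_zero)
  also have "\<dots> = (1 / real b)\<^sup>2 * (real b * ((\<Sum>j=1..n. (norm (a j - abar))\<^sup>2) / real n))"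
    unfolding abar_def by (subst VL[OF n_pos]) (rule refl)
  also have "\<dots> = ((\<Sum>j=1..n. (norm (a j - abar))\<^sup>2) / real n) / real b"
    using bpos by (simp add: power2_eq_square)
  also have "\<dots> \<le> ((\<Sum>j=1..n. (norm (a j))\<^sup>2) / real n) / real b"
    using var_le_second[OF n_pos, of a] bpos unfolding abar_def
    by (intro divide_right_mono) auto
  also have "(\<Sum>j=1..n. (norm (a j))\<^sup>2) \<le> (\<Sum>j=1..n. L\<^sup>2 * (norm (w - wt))\<^sup>2)"
  proof (rule sum_mono)
    fix j assume j: "j \<in> {1..n}"
    have "norm (a j) \<le> L * norm (w - wt)" using f_smooth[OF j] by (simp add: a_def)
    hence "(norm (a j))\<^sup>2 \<le> (L * norm (w - wt))\<^sup>2" by (intro power_mono) auto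
    then show "(norm (a j))\<^sup>2 \<le> L\<^sup>2 * (norm (w - wt))\<^sup>2" by (simp add: power_mult_distrib)
  qed
  hence "((\<Sum>j=1..n. (norm (a j))\<^sup>2) / real n) / real b \<le> ((\<Sum>j=1..n. L\<^sup>2 * (norm (w - wt))\<^sup>2) / real n) / real b"
    using bpos n_pos by (intro divide_right_mono) auto
  also have "\<dots> = L\<^sup>2 / real b * (norm (w - wt))\<^sup>2" using n_pos by simp
  finally show ?thesis .
qed

end


locale vrs2 = vrs +
  fixes S m :: nat and w1 :: 'a
  assumes S_pos: "S > 0" and m_pos: "m > 0" and hw1: "h w1 < \<infinity>"
begin

definition "bb = m\<^sup>2"
definition "P = sample_pmf n S m bb"
definition "xx \<omega> k t = vrspa_iter n m bb df \<zeta> h lam gam \<omega> w1 k t"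
definition "sn \<omega> k = vrspa_snap n m bb df \<zeta> h lam gam \<omega> w1 k"
definition "Phi w = hr w + Fs w"

lemma bb_pos: "bb > 0" using m_pos by (simp add: bb_def)

lemma inner_Suc: "vrspa_inner n b df \<zeta> h lam gam \<omega> wt k (Suc t)
   = stepf b (vrspa_inner n b df \<zeta> h lam gam \<omega> wt k t) wt (\<lambda>i. \<omega> (k, Suc t, i))"
  by (simp add: stepf_def stepv_def Let_def)

lemma iter_Suc: assumes "1 \<le> t"
  shows "xx \<omega> k (Suc t) = stepf bb (xx \<omega> k t) (sn \<omega> k) (\<lambda>i. \<omega> (k, t, i))"
proof -
  obtain t' where t: "t = Suc t'" using assms by (cases t) auto
  show ?thesis unfolding xx_def vrspa_iter_def sn_def t by (simp add: inner_Suc del: vrspa_inner.simps)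
qed

lemma iter_1: "xx \<omega> k 1 = sn \<omega> k"
  by (simp add: xx_def vrspa_iter_def sn_def)

lemma iter_last: assumes "1 \<le> k" shows "xx \<omega> k (Suc m) = sn \<omega> (Suc k)"
proof -
  obtain k' where k: "k = Suc k'" using assms by (cases k) auto
  show ?thesis unfolding xx_def vrspa_iter_def sn_def k by simp
qed

lemma fin_inner: assumes "h wt < \<infinity>" shows "h (vrspa_inner n b df \<zeta> h lam gam \<omega> wt k j) < \<infinity>"
proof (cases j)
  case 0 then show ?thesis using assms by simp
next
  case (Suc j') then show ?thesis
    by (simp only: inner_Suc stepf_def) (rule finite_lt_inf[OF prox_finite[OF hpcc gam_pos]])
qed

lemma fin_sn: "h (sn \<omega> k) < \<infinity>"
proof (induction k rule: less_induct)
  case (less k)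
  show ?case
  proof (cases k)
    case 0 then show ?thesis using hw1 by (simp add: sn_def)
  next
    case (Suc k1) note k1 = this
    show ?thesis
    proof (cases k1)
      case 0 then show ?thesis using hw1 k1 by (simp add: sn_def)
    next
      case (Suc k2)
      have "h (sn \<omega> k1) < \<infinity>" using less k1 by simp
      hence "h (vrspa_inner n bb df \<zeta> h lam gam \<omega> (sn \<omega> k1) k1 m) < \<infinity>" by (rule fin_inner)
      then show ?thesis using k1 Suc unfolding sn_def by simp
    qed
  qed
qed

lemma fin_xx: "h (xx \<omega> k t) < \<infinity>"
  unfolding xx_def vrspa_iter_def using fin_sn[of \<omega> k] unfolding sn_def by (rule fin_inner)

lemma cong_inner:
  assumes "\<And>s i. 1 \<le> s \<Longrightarrow> s \<le> j \<Longrightarrow> 1 \<le> i \<Longrightarrow> i \<le> b \<Longrightarrow> \<omega> (k, s, i) = \<omega>' (k, s, i)"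
  shows "vrspa_inner n b df \<zeta> h lam gam \<omega> wt k j = vrspa_inner n b df \<zeta> h lam gam \<omega>' wt k j"
  using assms
proof (induction j)
  case 0 then show ?case by simp
next
  case (Suc j)
  have IH: "vrspa_inner n b df \<zeta> h lam gam \<omega> wt k j = vrspa_inner n b df \<zeta> h lam gam \<omega>' wt k j"
    using Suc by simp
  have "(\<lambda>i. \<omega> (k, Suc j, i)) i = (\<lambda>i. \<omega>' (k, Suc j, i)) i" if "i \<in> {1..b}" for i
    using Suc.prems that by auto
  hence sv: "stepv b w wt (\<lambda>i. \<omega> (k, Suc j, i)) = stepv b w wt (\<lambda>i. \<omega>' (k, Suc j, i))" for w
    unfolding stepv_def by (metis (no_types, lifting) sum.cong)
  show ?case by (simp only: inner_Suc IH stepf_def sv)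
qed

lemma cong_sn:
  assumes "\<And>k' s i. 1 \<le> k' \<Longrightarrow> k' < k \<Longrightarrow> 1 \<le> s \<Longrightarrow> s \<le> m \<Longrightarrow> 1 \<le> i \<Longrightarrow> i \<le> bb
       \<Longrightarrow> \<omega> (k', s, i) = \<omega>' (k', s, i)"
  shows "sn \<omega> k = sn \<omega>' k"
  using assms
proof (induction k rule: less_induct)
  case (less k)
  show ?case
  proof (cases k)
    case 0 then show ?thesis by (simp add: sn_def)
  next
    case (Suc k1) note k1 = this
    show ?thesis
    proof (cases k1)
      case 0 then show ?thesis using k1 by (simp add: sn_def)
    next
      case (Suc k2)
      have IH: "sn \<omega> k1 = sn \<omega>' k1" using less.IH[of k1] less.prems k1 by simp
      have "vrspa_inner n bb df \<zeta> h lam gam \<omega> (sn \<omega>' k1) k1 m = vrspa_inner n bb df \<zeta> h lam gam \<omega>' (sn \<omega>' k1) k1 m"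
        by (rule cong_inner) (use less.prems k1 Suc in auto)
      then show ?thesis using k1 Suc IH unfolding sn_def by simp
    qed
  qed
qed

end


context vrs2 begin

definition "II = {1..S} \<times> {1..m} \<times> {1..bb}"

lemma P_def2: "P = Pi_pmf II 0 (\<lambda>_. pmf_of_set {1..n})"
  by (simp add: P_def sample_pmf_def II_def)

lemma fP: "finite (set_pmf P)"
  unfolding P_def2 by (rule fin_Pi) (use n_pos in \<open>auto simp: II_def\<close>)

lemma intP: "integrable (measure_pmf P) (F :: _ \<Rightarrow> real)"
  by (rule integrable_measure_pmf_finite[OF fP])

lemma dep_xx:
  assumes k: "k \<in> {1..S}" and t: "t \<in> {1..m}"
    and agree: "\<And>i. i \<in> II - (\<lambda>i. (k, t, i)) ` {1..bb} \<Longrightarrow> \<omega> i = \<omega>' i"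
  shows "sn \<omega> k = sn \<omega>' k" and "xx \<omega> k t = xx \<omega>' k t"
proof -
  show s: "sn \<omega> k = sn \<omega>' k"
    by (rule cong_sn) (rule agree, use k in \<open>auto simp: II_def\<close>)
  have "vrspa_inner n bb df \<zeta> h lam gam \<omega> (sn \<omega>' k) k (t - 1) = vrspa_inner n bb df \<zeta> h lam gam \<omega>' (sn \<omega>' k) k (t - 1)"
    by (rule cong_inner) (rule agree, use k t in \<open>auto simp: II_def\<close>)
  then show "xx \<omega> k t = xx \<omega>' k t" using s by (simp add: xx_def vrspa_iter_def sn_def)
qed

lemma err_bound:
  assumes k: "k \<in> {1..S}" and t: "t \<in> {1..m}"
  shows "measure_pmf.expectation P (\<lambda>\<omega>. (norm (stepv bb (xx \<omega> k t) (sn \<omega> k) (\<lambda>i. \<omega> (k, t, i)) - gradF (xx \<omega> k t)))\<^sup>2)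
       \<le> measure_pmf.expectation P (\<lambda>\<omega>. L\<^sup>2 / real bb * (norm (xx \<omega> k t - sn \<omega> k))\<^sup>2)"
proof -
  define hm where "hm = (\<lambda>i::nat. (k, t, i))"
  define B where "B = hm ` {1..bb}"
  define Y where "Y = (\<lambda>(w, wt) u. (norm (stepv bb w wt u - gradF w))\<^sup>2)"
  define X where "X = (\<lambda>\<omega>. (xx \<omega> k t, sn \<omega> k))"
  have "measure_pmf.expectation (Pi_pmf II 0 (\<lambda>_. pmf_of_set {1..n})) (\<lambda>\<omega>. Y (X \<omega>) (\<omega> \<circ> hm))
       = measure_pmf.expectation (Pi_pmf II 0 (\<lambda>_. pmf_of_set {1..n}))
           (\<lambda>\<omega>. measure_pmf.expectation (Pi_pmf {1..bb} 0 (\<lambda>_. pmf_of_set {1..n})) (\<lambda>u. Y (X \<omega>) u))"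
  proof (rule PL)
    show "finite II" by (simp add: II_def)
    show "B \<subseteq> II" using k t by (auto simp: B_def hm_def II_def)
    show "finite (set_pmf (pmf_of_set {1..n}))" using n_pos by simp
    show "bij_betw hm {1..bb} B" unfolding B_def by (rule bij_betw_imageI) (auto simp: hm_def inj_on_def)
    show "finite {1..bb}" by simp
    show "hm x \<notin> II" if "x \<notin> {1..bb}" for x using that by (simp add: hm_def II_def)
    show "X \<omega> = X \<omega>'" if "\<And>i. i \<in> II - B \<Longrightarrow> \<omega> i = \<omega>' i" for \<omega> \<omega>'
      using dep_xx[OF k t, of \<omega> \<omega>'] that by (simp add: X_def B_def hm_def)
  qed
  hence eq: "measure_pmf.expectation P (\<lambda>\<omega>. (norm (stepv bb (xx \<omega> k t) (sn \<omega> k) (\<lambda>i. \<omega> (k, t, i)) - gradF (xx \<omega> k t)))\<^sup>2)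
       = measure_pmf.expectation P (\<lambda>\<omega>. measure_pmf.expectation (Pi_pmf {1..bb} 0 (\<lambda>_. pmf_of_set {1..n}))
            (\<lambda>u. (norm (stepv bb (xx \<omega> k t) (sn \<omega> k) u - gradF (xx \<omega> k t)))\<^sup>2))"
    by (simp add: P_def2 Y_def X_def hm_def o_def)
  show ?thesis unfolding eq
    by (rule integral_mono[OF intP intP]) (rule VLb[OF bb_pos])
qed

lemma EL:
  assumes k: "k \<in> {1..S}" and t: "t \<in> {1..m}" and c0: "c \<ge> 0" and cm: "c * (1 + real m) \<le> 1 / (4 * gam)"
  shows "measure_pmf.expectation P (\<lambda>\<omega>. Phi (xx \<omega> k (Suc t)) + c * (norm (xx \<omega> k (Suc t) - sn \<omega> k))\<^sup>2)
   \<le> measure_pmf.expectation P (\<lambda>\<omega>. Phi (xx \<omega> k t) + (c * (1 + 1 / real m) + 4 * gam / 3 * (L\<^sup>2 / real bb))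
          * (norm (xx \<omega> k t - sn \<omega> k))\<^sup>2)
     - gam / 6 * measure_pmf.expectation P (\<lambda>\<omega>. (norm (Gm (xx \<omega> k t)))\<^sup>2)"
proof -
  define er where "er \<omega> = (norm (stepv bb (xx \<omega> k t) (sn \<omega> k) (\<lambda>i. \<omega> (k, t, i)) - gradF (xx \<omega> k t)))\<^sup>2" for \<omega>
  define R1 where "R1 \<omega> = Phi (xx \<omega> k t) + c * (1 + 1 / real m) * (norm (xx \<omega> k t - sn \<omega> k))\<^sup>2" for \<omega>
  define G2 where "G2 \<omega> = (norm (Gm (xx \<omega> k t)))\<^sup>2" for \<omega>
  define D2 where "D2 \<omega> = (norm (xx \<omega> k t - sn \<omega> k))\<^sup>2" for \<omega>
  have t1: "1 \<le> t" using t by simp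
  have pw: "Phi (xx \<omega> k (Suc t)) + c * (norm (xx \<omega> k (Suc t) - sn \<omega> k))\<^sup>2
      \<le> R1 \<omega> + (4 * gam / 3) * er \<omega> - (gam / 6) * G2 \<omega>" for \<omega>
    unfolding iter_Suc[OF t1] Phi_def R1_def er_def G2_def
    using DL(2)[OF fin_xx[of \<omega> k t] c0 cm m_pos, where b=bb and wt="sn \<omega> k" and u="\<lambda>i. \<omega> (k, t, i)"]
    by (simp add: algebra_simps)
  have "measure_pmf.expectation P (\<lambda>\<omega>. Phi (xx \<omega> k (Suc t)) + c * (norm (xx \<omega> k (Suc t) - sn \<omega> k))\<^sup>2)
      \<le> measure_pmf.expectation P (\<lambda>\<omega>. R1 \<omega> + (4 * gam / 3) * er \<omega> - (gam / 6) * G2 \<omega>)"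
    by (rule integral_mono[OF intP intP pw])
  also have "\<dots> = measure_pmf.expectation P R1 + (4 * gam / 3) * measure_pmf.expectation P er
      - (gam / 6) * measure_pmf.expectation P G2"
    by (simp add: intP)
  also have "measure_pmf.expectation P er \<le> measure_pmf.expectation P (\<lambda>\<omega>. L\<^sup>2 / real bb * D2 \<omega>)"
    unfolding er_def D2_def by (rule err_bound[OF k t])
  also have "measure_pmf.expectation P (\<lambda>\<omega>. L\<^sup>2 / real bb * D2 \<omega>) = L\<^sup>2 / real bb * measure_pmf.expectation P D2"
    by simp
  finally have A: "measure_pmf.expectation P (\<lambda>\<omega>. Phi (xx \<omega> k (Suc t)) + c * (norm (xx \<omega> k (Suc t) - sn \<omega> k))\<^sup>2)
      \<le> measure_pmf.expectation P R1 + (4 * gam / 3) * (L\<^sup>2 / real bb * measure_pmf.expectation P D2)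
      - (gam / 6) * measure_pmf.expectation P G2"
    using gam_pos by (simp add: mult_left_mono)
  have "measure_pmf.expectation P (\<lambda>\<omega>. Phi (xx \<omega> k t) + (c * (1 + 1 / real m) + 4 * gam / 3 * (L\<^sup>2 / real bb))
          * (norm (xx \<omega> k t - sn \<omega> k))\<^sup>2)
      = measure_pmf.expectation P (\<lambda>\<omega>. R1 \<omega> + (4 * gam / 3 * (L\<^sup>2 / real bb)) * D2 \<omega>)"
    by (simp add: R1_def D2_def algebra_simps)
  also have "\<dots> = measure_pmf.expectation P R1 + (4 * gam / 3) * (L\<^sup>2 / real bb * measure_pmf.expectation P D2)"
    by (simp add: intP)
  finally show ?thesis using A unfolding G2_def by simp
qed

end


context vrs2 begin

definition "rr = 1 + 1 / real m"
definition "KK = 4 * gam / 3 * (L\<^sup>2 / real bb)"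
definition "cc t = KK * (\<Sum>i<(Suc m - t). rr ^ i)"

lemma KK_nn: "KK \<ge> 0" using gam_pos by (simp add: KK_def)
lemma rr_ge1: "rr \<ge> 1" by (simp add: rr_def)

lemma cc_nn: "cc t \<ge> 0"
  unfolding cc_def using KK_nn rr_ge1 by (intro mult_nonneg_nonneg sum_nonneg) auto

lemma cc_last: "cc (Suc m) = 0" by (simp add: cc_def)

lemma cc_rec: assumes "t \<in> {1..m}" shows "cc (Suc t) * (1 + 1 / real m) + KK = cc t"
proof -
  have a: "Suc m - t = Suc (m - t)" and b: "Suc m - Suc t = m - t" using assms by auto
  have sh: "(\<Sum>i<Suc N. rr ^ i) = 1 + rr * (\<Sum>i<N. rr ^ i)" for N
    by (simp only: sum.lessThan_Suc_shift sum_distrib_left) simp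
  show ?thesis unfolding cc_def rr_def[symmetric] a b sh by (simp add: algebra_simps)
qed

lemma rr_pow: assumes "i \<le> m" shows "rr ^ i \<le> 3"
proof -
  have "rr ^ i \<le> rr ^ m" by (rule power_increasing[OF assms rr_ge1])
  also have "rr ^ m \<le> exp (1 / real m) ^ m"
    unfolding rr_def by (rule power_mono) (use exp_ge_add_one_self in auto)
  also have "exp (1 / real m) ^ m = exp (real m * (1 / real m))" by (rule exp_of_nat_mult[symmetric])
  also have "\<dots> = exp 1" using m_pos by simp
  also have "\<dots> \<le> 3" by (rule exp_le)
  finally show ?thesis .
qed

lemma cc_bound: assumes "t \<in> {1..m}" shows "cc (Suc t) * (1 + real m) \<le> 1 / (4 * gam)"
proof -
  have "(\<Sum>i<(Suc m - Suc t). rr ^ i) \<le> (\<Sum>i<(Suc m - Suc t). 3)"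
    by (rule sum_mono) (rule rr_pow, use assms in auto)
  also have "\<dots> \<le> 3 * real m" by simp
  finally have s: "(\<Sum>i<(Suc m - Suc t). rr ^ i) \<le> 3 * real m" .
  have "cc (Suc t) \<le> KK * (3 * real m)" unfolding cc_def using mult_left_mono[OF s KK_nn] .
  hence "cc (Suc t) * (1 + real m) \<le> KK * (3 * real m) * (1 + real m)"
    by (rule mult_right_mono) simp
  also have "\<dots> \<le> KK * (3 * real m) * (2 * real m)"
    using KK_nn m_pos by (intro mult_left_mono) auto
  also have "\<dots> = 8 * gam * L\<^sup>2" using m_pos by (simp add: KK_def bb_def power2_eq_square)
  also have "\<dots> \<le> 1 / (4 * gam)"
  proof -
    have gL: "0 \<le> gam * L" "gam * L \<le> 1 / 6" using gam_pos L_nn gam_L by auto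
    have "(gam * L)\<^sup>2 \<le> (1 / 6)\<^sup>2" using gL by (intro power_mono) auto
    hence "8 * gam * L\<^sup>2 * gam \<le> 1 / 4" by (simp add: power_mult_distrib power2_eq_square algebra_simps)
    then show ?thesis using gam_pos by (simp add: field_simps)
  qed
  finally show ?thesis .
qed

definition "EG k t = measure_pmf.expectation P (\<lambda>\<omega>. (norm (Gm (xx \<omega> k t)))\<^sup>2)"
definition "Psi k t = measure_pmf.expectation P (\<lambda>\<omega>. Phi (xx \<omega> k t) + cc t * (norm (xx \<omega> k t - sn \<omega> k))\<^sup>2)"

lemma Psi_step: assumes k: "k \<in> {1..S}" and t: "t \<in> {1..m}"
  shows "Psi k (Suc t) \<le> Psi k t - gam / 6 * EG k t"
  using EL[OF k t cc_nn cc_bound[OF t]] unfolding Psi_def EG_def KK_def[symmetric] cc_rec[OF t] .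

lemma Psi_sum: assumes k: "k \<in> {1..S}"
  shows "t \<le> m \<Longrightarrow> Psi k (Suc t) \<le> Psi k 1 - gam / 6 * (\<Sum>s=1..t. EG k s)"
proof (induction t)
  case 0 then show ?case by simp
next
  case (Suc t)
  have "Psi k (Suc (Suc t)) \<le> Psi k (Suc t) - gam / 6 * EG k (Suc t)"
    by (rule Psi_step[OF k]) (use Suc.prems in auto)
  also have "\<dots> \<le> Psi k 1 - gam / 6 * (\<Sum>s=1..t. EG k s) - gam / 6 * EG k (Suc t)"
    using Suc by simp
  finally show ?case by (simp add: algebra_simps)
qed

lemma Psi_1: "Psi k 1 = measure_pmf.expectation P (\<lambda>\<omega>. Phi (sn \<omega> k))"
  unfolding Psi_def iter_1 by simp

lemma Psi_last: assumes "1 \<le> k" shows "Psi k (Suc m) = measure_pmf.expectation P (\<lambda>\<omega>. Phi (sn \<omega> (Suc k)))"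
  by (simp add: Psi_def iter_last[OF assms] cc_last)

lemma epochs: "k \<le> S \<Longrightarrow> measure_pmf.expectation P (\<lambda>\<omega>. Phi (sn \<omega> (Suc k)))
    \<le> Phi w1 - gam / 6 * (\<Sum>k'=1..k. \<Sum>s=1..m. EG k' s)"
proof (induction k)
  case 0 then show ?case by (simp add: sn_def)
next
  case (Suc k)
  have k: "Suc k \<in> {1..S}" using Suc.prems by simp
  have "measure_pmf.expectation P (\<lambda>\<omega>. Phi (sn \<omega> (Suc (Suc k)))) = Psi (Suc k) (Suc m)"
    by (simp add: Psi_last)
  also have "\<dots> \<le> Psi (Suc k) 1 - gam / 6 * (\<Sum>s=1..m. EG (Suc k) s)"
    by (rule Psi_sum[OF k]) simp
  also have "Psi (Suc k) 1 \<le> Phi w1 - gam / 6 * (\<Sum>k'=1..k. \<Sum>s=1..m. EG k' s)"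
    unfolding Psi_1 using Suc by simp
  finally show ?case by (simp add: algebra_simps)
qed

end


context vrs2 begin

lemma fin_real: assumes "h w < \<infinity>" shows "h w = ereal (hr w)"
proof -
  have "h w > -\<infinity>" using hpcc unfolding pcc_def proper_fun_def by auto
  then show ?thesis using assms unfolding hr_def by (cases "h w") auto
qed

lemma final:
  assumes wmin: "\<And>w. ereal (Fs wstar) + h wstar \<le> ereal (Fs w) + h w"
  shows "h wstar = ereal (hr wstar)"
    and "measure_pmf.expectation (pair_pmf P (pmf_of_set ({1..S} \<times> {1..m})))
          (\<lambda>(\<omega>, (R, T)). (norm (Gm (xx \<omega> R T)))\<^sup>2) \<le> 36 * Lm * (Phi w1 - Phi wstar) / real (S * m)"
proof -
  have h1: "h w1 = ereal (hr w1)" by (rule fin_real[OF hw1])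
  have "ereal (Fs wstar) + h wstar \<le> ereal (Fs w1) + h w1" by (rule wmin)
  also have "\<dots> = ereal (Fs w1 + hr w1)" using h1 by simp
  finally have "h wstar \<noteq> \<infinity>" by auto
  hence hs: "h wstar = ereal (hr wstar)" by (intro fin_real) (simp add: top.not_eq_extremum)
  show "h wstar = ereal (hr wstar)" by (rule hs)
  have lowb: "Phi wstar \<le> Phi w" if "h w < \<infinity>" for w
  proof -
    have "ereal (Fs wstar) + ereal (hr wstar) \<le> ereal (Fs w) + ereal (hr w)"
      using wmin[of w] hs fin_real[OF that] by simp
    then show ?thesis by (simp add: Phi_def add.commute)
  qed
  have "Phi wstar = measure_pmf.expectation P (\<lambda>_. Phi wstar)" by simp
  also have "\<dots> \<le> measure_pmf.expectation P (\<lambda>\<omega>. Phi (sn \<omega> (Suc S)))"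
    by (rule integral_mono[OF intP intP]) (rule lowb[OF fin_sn])
  also have "\<dots> \<le> Phi w1 - gam / 6 * (\<Sum>k'=1..S. \<Sum>s=1..m. EG k' s)"
    by (rule epochs) simp
  finally have main: "gam / 6 * (\<Sum>k'=1..S. \<Sum>s=1..m. EG k' s) \<le> Phi w1 - Phi wstar" by simp
  define U where "U = pmf_of_set ({1..S} \<times> {1..m})"
  have fU: "finite (set_pmf U)" using S_pos m_pos by (simp add: U_def)
  have cardU: "card ({1..S} \<times> {1..m}) = S * m" by (simp add: card_cartesian_product)
  have "measure_pmf.expectation (pair_pmf P U) (\<lambda>(\<omega>, (R, T)). (norm (Gm (xx \<omega> R T)))\<^sup>2)
      = measure_pmf.expectation P (\<lambda>\<omega>. measure_pmf.expectation U (\<lambda>z. (norm (Gm (xx \<omega> (fst z) (snd z))))\<^sup>2))"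
    by (subst fubini_pmf[OF fP fU]) (simp add: case_prod_beta)
  also have "\<dots> = measure_pmf.expectation P (\<lambda>\<omega>. (\<Sum>z\<in>{1..S} \<times> {1..m}. (norm (Gm (xx \<omega> (fst z) (snd z))))\<^sup>2) / real (S * m))"
    using S_pos m_pos unfolding U_def by (subst integral_pmf_of_set) (auto simp: cardU)
  also have "\<dots> = (\<Sum>z\<in>{1..S} \<times> {1..m}. EG (fst z) (snd z)) / real (S * m)"
    by (simp add: EG_def intP)
  also have "(\<Sum>z\<in>{1..S} \<times> {1..m}. EG (fst z) (snd z)) = (\<Sum>k'=1..S. \<Sum>s=1..m. EG k' s)"
    by (simp add: sum.cartesian_product case_prod_beta)
  also have "(\<Sum>k'=1..S. \<Sum>s=1..m. EG k' s) \<le> 6 / gam * (Phi w1 - Phi wstar)"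
    using main gam_pos by (simp add: field_simps)
  also have "6 / gam = 36 * Lm" using Lm_pos by (simp add: gam_def)
  finally show "measure_pmf.expectation (pair_pmf P (pmf_of_set ({1..S} \<times> {1..m})))
          (\<lambda>(\<omega>, (R, T)). (norm (Gm (xx \<omega> R T)))\<^sup>2) \<le> 36 * Lm * (Phi w1 - Phi wstar) / real (S * m)"
    using S_pos m_pos unfolding U_def by (simp add: divide_right_mono)
qed

end


theorem lemma7:
  fixes n S m :: nat and L \<theta> :: real
    and f :: "nat \<Rightarrow> 'a::euclidean_space \<Rightarrow> real" and df :: "nat \<Rightarrow> 'a \<Rightarrow> 'a"
    and g :: "'a \<Rightarrow> real" and \<zeta> :: "real \<Rightarrow> 'a \<Rightarrow> 'a"
    and h :: "'a \<Rightarrow> ereal" and w1 wstar :: 'a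
  assumes n_pos: "n > 0"
    and f_grad: "\<And>j x. j \<in> {1..n} \<Longrightarrow> (f j has_derivative (\<lambda>v. df j x \<bullet> v)) (at x)"
    and f_smooth: "\<And>j x y. j \<in> {1..n} \<Longrightarrow> norm (df j x - df j y) \<le> L * norm (x - y)"
    and \<zeta>_min: "\<And>lam w x. lam > 0 \<Longrightarrow>
       1 / (2 * lam) * (norm (w - \<zeta> lam w))\<^sup>2 + g (\<zeta> lam w) \<le> 1 / (2 * lam) * (norm (w - x))\<^sup>2 + g x"
    and h_proper: "proper_fun h" and h_closed: "closed_fun h" and h_convex: "convex_fun h"
    and S_pos: "S > 0" and m_pos: "m > 0"
    and wstar_min: "\<And>w. ereal ((1 / real n) * (\<Sum>j=1..n. f j wstar)
                              + env (real (S * m) powr (- \<theta>)) g \<zeta> wstar) + h wstar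
                     \<le> ereal ((1 / real n) * (\<Sum>j=1..n. f j w)
                              + env (real (S * m) powr (- \<theta>)) g \<zeta> w) + h w"
  shows
    "(let b = m\<^sup>2; lam = real (S * m) powr (- \<theta>); Llam = L + real (S * m) powr \<theta>;
          \<gamma> = 1 / (6 * Llam);
          \<Phi> = (\<lambda>w. ereal ((1 / real n) * (\<Sum>j=1..n. f j w) + env lam g \<zeta> w) + h w);
          Gmap = (\<lambda>w. (1 / \<gamma>) *\<^sub>R (w - prox \<gamma> h (w - \<gamma> *\<^sub>R
                     (full_grad n df w + (1 / lam) *\<^sub>R (w - \<zeta> lam w)))));
          D = 36 * (\<Phi> w1 - \<Phi> wstar)
      in ereal (measure_pmf.expectation
                  (pair_pmf (sample_pmf n S m b) (pmf_of_set ({1..S} \<times> {1..m})))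
                  (\<lambda>(\<omega>, (R, T)). (norm (Gmap (vrspa_iter n m b df \<zeta> h lam \<gamma> \<omega> w1 R T)))\<^sup>2))
         \<le> D * ereal ((L + real (S * m) powr \<theta>) / real (S * m)))"
proof -
  define lam where "lam = real (S * m) powr (- \<theta>)"
  define Llam where "Llam = L + real (S * m) powr \<theta>"
  have Smpos: "real (S * m) > 0" using S_pos m_pos by simp
  have lam_pos: "lam > 0" using S_pos m_pos by (simp add: lam_def)
  have ilam: "1 / lam = real (S * m) powr \<theta>" using Smpos by (simp add: lam_def powr_minus divide_inverse)
  have L_nn: "L \<ge> 0"
  proof -
    obtain e :: 'a where e: "e \<in> Basis" using nonempty_Basis by blast
    have "norm (df 1 e - df 1 0) \<le> L * norm (e - 0)" using f_smooth[of 1 e 0] n_pos by simp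
    moreover have "norm e = 1" using e by simp
    ultimately show ?thesis by (smt (verit) norm_ge_zero mult_cancel_left1 diff_zero)
  qed
  have pp: "0 < real (S * m) powr \<theta>" using S_pos m_pos by simp
  have Llam_pos: "Llam > 0" using L_nn pp unfolding Llam_def by linarith
  have hpcc: "pcc h" using h_proper h_closed h_convex by (simp add: pcc_def)
  have zm: "\<And>w x. 1 / (2 * lam) * (norm (w - \<zeta> lam w))\<^sup>2 + g (\<zeta> lam w) \<le> 1 / (2 * lam) * (norm (w - x))\<^sup>2 + g x"
    using \<zeta>_min[OF lam_pos] by blast
  define \<Phi> where "\<Phi> = (\<lambda>w. ereal ((1 / real n) * (\<Sum>j=1..n. f j w) + env lam g \<zeta> w) + h w)"
  define Gmap where "Gmap = (\<lambda>w. (1 / (1 / (6 * Llam))) *\<^sub>R (w - prox (1 / (6 * Llam)) h (w - (1 / (6 * Llam)) *\<^sub>R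
                     (full_grad n df w + (1 / lam) *\<^sub>R (w - \<zeta> lam w)))))"
  define EXP where "EXP = measure_pmf.expectation
                  (pair_pmf (sample_pmf n S m (m\<^sup>2)) (pmf_of_set ({1..S} \<times> {1..m})))
                  (\<lambda>(\<omega>, (R, T)). (norm (Gmap (vrspa_iter n m (m\<^sup>2) df \<zeta> h lam (1 / (6 * Llam)) \<omega> w1 R T)))\<^sup>2)"
  have goal: "ereal EXP \<le> 36 * (\<Phi> w1 - \<Phi> wstar) * ereal (Llam / real (S * m))"
  proof (cases "h w1 = \<infinity>")
    case True
    obtain x where hx: "h x < \<infinity>" using h_proper unfolding proper_fun_def by auto
    have "\<Phi> wstar \<le> \<Phi> x" using wstar_min[of x] unfolding \<Phi>_def lam_def by simp
    also have "\<Phi> x < \<infinity>" using hx unfolding \<Phi>_def by simp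
    finally have fs: "\<Phi> wstar < \<infinity>" .
    have "\<Phi> w1 = \<infinity>" using True unfolding \<Phi>_def by simp
    hence "36 * (\<Phi> w1 - \<Phi> wstar) = \<infinity>" using fs by simp
    moreover have "Llam / real (S * m) > 0" using Llam_pos Smpos by simp
    ultimately show ?thesis using Llam_pos S_pos m_pos by simp
  next
    case False
    hence hw1: "h w1 < \<infinity>" by (simp add: top.not_eq_extremum)
    interpret V: vrs2 n L f df g \<zeta> h lam S m w1
      by unfold_locales (use n_pos f_grad f_smooth zm hpcc lam_pos L_nn S_pos m_pos hw1 in auto)
    have Lm_eq: "V.Lm = Llam" by (simp add: V.Lm_def Llam_def ilam)
    have gam_eq: "V.gam = 1 / (6 * Llam)" by (simp add: V.gam_def Lm_eq)
    have bb_eq: "V.bb = m\<^sup>2" by (simp add: V.bb_def)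
    have wm: "ereal (V.Fs wstar) + h wstar \<le> ereal (V.Fs w) + h w" for w
      using wstar_min[of w, folded lam_def] unfolding V.Fs_def by simp
    have EXPeq: "EXP = measure_pmf.expectation (pair_pmf V.P (pmf_of_set ({1..S} \<times> {1..m})))
          (\<lambda>(\<omega>, (R, T)). (norm (V.Gm (V.xx \<omega> R T)))\<^sup>2)"
      unfolding EXP_def V.P_def V.xx_def bb_eq gam_eq Gmap_def V.Gm_def V.gradF_def by simp
    have hs: "h wstar = ereal (V.hr wstar)" by (rule V.final(1)[OF wm])
    have h1: "h w1 = ereal (V.hr w1)" by (rule V.fin_real[OF hw1])
    have "EXP \<le> 36 * Llam * (V.Phi w1 - V.Phi wstar) / real (S * m)"
      using V.final(2)[OF wm] unfolding EXPeq Lm_eq .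
    moreover have "36 * (\<Phi> w1 - \<Phi> wstar) * ereal (Llam / real (S * m))
        = ereal (36 * Llam * (V.Phi w1 - V.Phi wstar) / real (S * m))"
    proof -
      have "36 * (\<Phi> w1 - \<Phi> wstar) * ereal (Llam / real (S * m))
          = ereal (36 * (V.Phi w1 - V.Phi wstar) * (Llam / real (S * m)))"
        unfolding \<Phi>_def V.Phi_def V.Fs_def[symmetric] hs h1 by (simp add: algebra_simps)
      also have "36 * (V.Phi w1 - V.Phi wstar) * (Llam / real (S * m)) = 36 * Llam * (V.Phi w1 - V.Phi wstar) / real (S * m)"
        by simp
      finally show ?thesis .
    qed
    ultimately show ?thesis by simp
  qed
  show ?thesis
    unfolding Let_def lam_def[symmetric] Llam_def[symmetric]
    using goal unfolding EXP_def Gmap_def \<Phi>_def by simp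
qed


end
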